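(* Let $D\subsetneq\mathbb C$ be a domain and $x_0\in D$ with $\int_D k_D(x,x_0)^2dx<\infty$, and fix a Whitney decomposition $\mathcal W(D)$. There is a constant $C>0$ (depending only on $D$, $x_0$) such that the following holds: if $\gamma$ is a quasihyperbolic geodesic passing through $x_0$, $j_0\in\mathbb N$, and $\beta$ is a subpath of $\gamma$ that intersects only Whitney cubes $Q\in\mathcal W(D)$ with $j(Q)\ge j_0$, then $\mathrm{length}(\beta)\le C j_0^{-1/2}$. In particular, $D$ is bounded.
   Context: $\delta_D(x)=\mathrm{dist}(x,\partial D)$; quasihyperbolic distance $k_D(x_1,x_2)=\inf_\gamma\int_\gamma\delta_D^{-1}ds$ over rectifiable paths in $D$ joining $x_1,x_2$; a quasihyperbolic geodesic is a simple curve in $D$ (possibly on a half-open interval) along which the $\delta_D^{-1}$-length of each subpath equals the quasihyperbolic distance of its endpoints. A Whitney decomposition $\mathcal W(D)$ is a collection of closed dyadic squares ("cubes") $Q\subset D$ with disjoint interiors, union $D$, with $\sqrt2\,\ell(Q)<\mathrm{dist}(Q,\partial D)\le4\sqrt2\,\ell(Q)$ ($\ell(Q)$ the side length), and $1/4\le\ell(Q_1)/\ell(Q_2)\le4$ whenever $Q_1\cap Q_2\ne\emptyset$. For $Q\in\mathcal W(D)$, $j(Q)$ is the unique $j\in\mathbb N$ with $Q\in D_j\setminus D_{j-1}$, where $D_0=\emptyset$ and $D_j=\{Q\in\mathcal W(D):k_D(x_0,Q)\le j\}$. *)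

theory Defs
  imports "HOL-Analysis.Analysis"
begin

definition bdist :: "complex set \<Rightarrow> complex \<Rightarrow> real" where
  "bdist D x = infdist x (- D)"

definition is_partition :: "real \<Rightarrow> real \<Rightarrow> (nat \<Rightarrow> real) \<Rightarrow> nat \<Rightarrow> bool" where
  "is_partition a b t n \<longleftrightarrow> t 0 = a \<and> t n = b \<and> (\<forall>i<n. t i \<le> t (Suc i))"

definition curve_length :: "(real \<Rightarrow> complex) \<Rightarrow> real \<Rightarrow> real \<Rightarrow> ereal" where
  "curve_length g a b =
     (SUP p \<in> {(t, n). is_partition a b t n}.
        ereal (\<Sum>i < snd p. cmod (g (fst p (Suc i)) - g (fst p i))))"

definition curve_length_on :: "(real \<Rightarrow> complex) \<Rightarrow> real set \<Rightarrow> ereal" where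
  "curve_length_on g J = (SUP p \<in> {(s, t). s \<in> J \<and> t \<in> J \<and> s \<le> t}. curve_length g (fst p) (snd p))"

(* quasihyperbolic (delta_D^{-1}-)length of g on [a,b]:
   integral of 1/delta_D with respect to arc length, realised as the supremum of
   lower Riemann-Stieltjes sums *)
definition qh_length :: "complex set \<Rightarrow> (real \<Rightarrow> complex) \<Rightarrow> real \<Rightarrow> real \<Rightarrow> ereal" where
  "qh_length D g a b =
     (SUP p \<in> {(t, n). is_partition a b t n}.
        ereal (\<Sum>i < snd p. (INF s \<in> {fst p i .. fst p (Suc i)}. 1 / bdist D (g s))
                             * cmod (g (fst p (Suc i)) - g (fst p i))))"

definition qhdist :: "complex set \<Rightarrow> complex \<Rightarrow> complex \<Rightarrow> real" where
  "qhdist D x y = real_of_ereal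
     (INF g \<in> {g. path g \<and> path_image g \<subseteq> D \<and> pathstart g = x \<and> pathfinish g = y
                  \<and> curve_length g 0 1 < \<infinity>}. qh_length D g 0 1)"

definition qhdist_set :: "complex set \<Rightarrow> complex \<Rightarrow> complex set \<Rightarrow> real" where
  "qhdist_set D x0 Q = (INF x \<in> Q. qhdist D x0 x)"

definition qh_geodesic :: "complex set \<Rightarrow> (real \<Rightarrow> complex) \<Rightarrow> real set \<Rightarrow> bool" where
  "qh_geodesic D g I \<longleftrightarrow>
     continuous_on I g \<and> inj_on g I \<and> g ` I \<subseteq> D \<and>
     (\<forall>s\<in>I. \<forall>t\<in>I. s \<le> t \<longrightarrow> qh_length D g s t = ereal (qhdist D (g s) (g t)))"

definition dyadic_sq :: "int \<Rightarrow> int \<Rightarrow> int \<Rightarrow> complex set" where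
  "dyadic_sq k m n = {z. m * 2 powi k \<le> Re z \<and> Re z \<le> (m + 1) * 2 powi k \<and>
                         n * 2 powi k \<le> Im z \<and> Im z \<le> (n + 1) * 2 powi k}"

definition is_dyadic_sq :: "complex set \<Rightarrow> bool" where
  "is_dyadic_sq Q \<longleftrightarrow> (\<exists>k m n. Q = dyadic_sq k m n)"

definition side :: "complex set \<Rightarrow> real" where
  "side Q = (THE l. \<exists>k m n. Q = dyadic_sq k m n \<and> l = 2 powi k)"

definition whitney :: "complex set \<Rightarrow> complex set set \<Rightarrow> bool" where
  "whitney D W \<longleftrightarrow>
     (\<forall>Q\<in>W. is_dyadic_sq Q \<and> Q \<subseteq> D) \<and>
     (\<forall>Q1\<in>W. \<forall>Q2\<in>W. Q1 \<noteq> Q2 \<longrightarrow> interior Q1 \<inter> interior Q2 = {}) \<and>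
     \<Union>W = D \<and>
     (\<forall>Q\<in>W. sqrt 2 * side Q < setdist Q (frontier D) \<and>
              setdist Q (frontier D) \<le> 4 * sqrt 2 * side Q) \<and>
     (\<forall>Q1\<in>W. \<forall>Q2\<in>W. Q1 \<inter> Q2 \<noteq> {} \<longrightarrow>
        1/4 \<le> side Q1 / side Q2 \<and> side Q1 / side Q2 \<le> 4)"

definition Dlayer :: "complex set \<Rightarrow> complex set set \<Rightarrow> complex \<Rightarrow> nat \<Rightarrow> complex set set" where
  "Dlayer D W x0 j = (if j = 0 then {} else {Q \<in> W. qhdist_set D x0 Q \<le> real j})"

definition jidx :: "complex set \<Rightarrow> complex set set \<Rightarrow> complex \<Rightarrow> complex set \<Rightarrow> nat" where
  "jidx D W x0 Q = (THE j. j \<ge> 1 \<and> Q \<in> Dlayer D W x0 j - Dlayer D W x0 (j - 1))"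

end

theory Submission
  imports Defs "HOL-Analysis.Analysis"
begin

definition lterm :: "(complex \<Rightarrow> real) \<Rightarrow> (real \<Rightarrow> complex) \<Rightarrow> (nat \<Rightarrow> real) \<Rightarrow> nat \<Rightarrow> real" where
  "lterm w g t i = (INF s \<in> {t i .. t (Suc i)}. w (g s)) * cmod (g (t (Suc i)) - g (t i))"

definition lsum :: "(complex \<Rightarrow> real) \<Rightarrow> (real \<Rightarrow> complex) \<Rightarrow> (nat \<Rightarrow> real) \<Rightarrow> nat \<Rightarrow> real" where
  "lsum w g t n = (\<Sum>i<n. lterm w g t i)"

definition LS :: "(complex \<Rightarrow> real) \<Rightarrow> (real \<Rightarrow> complex) \<Rightarrow> real \<Rightarrow> real \<Rightarrow> ereal" where
  "LS w g a b = (SUP p \<in> {(t, n). is_partition a b t n}. ereal (lsum w g (fst p) (snd p)))"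

lemma qh_length_LS: "qh_length D g a b = LS (\<lambda>z. 1 / bdist D z) g a b"
  unfolding qh_length_def LS_def lsum_def lterm_def by simp

lemma partition_mono: "is_partition a b t n \<Longrightarrow> i \<le> j \<Longrightarrow> j \<le> n \<Longrightarrow> t i \<le> t j"
proof (induction j)
  case 0 then show ?case by simp
next
  case (Suc j)
  show ?case
  proof (cases "i = Suc j")
    case True then show ?thesis by simp
  next
    case False
    then have "t i \<le> t j" using Suc by auto
    also have "t j \<le> t (Suc j)" using Suc.prems unfolding is_partition_def by auto
    finally show ?thesis .
  qed
qed

lemma partition_range: "is_partition a b t n \<Longrightarrow> i \<le> n \<Longrightarrow> a \<le> t i \<and> t i \<le> b"
  using partition_mono[of a b t n 0 i] partition_mono[of a b t n i n]
  unfolding is_partition_def by auto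

lemma partition_le: "is_partition a b t n \<Longrightarrow> a \<le> b"
  using partition_range[of a b t n n] by auto

lemma curve_length_LS: "curve_length g a b = LS (\<lambda>z. 1) g a b"
  unfolding curve_length_def LS_def lsum_def lterm_def
proof (rule SUP_cong)
  fix p assume "p \<in> {(t, n). is_partition a b t n}"
  then have P: "is_partition a b (fst p) (snd p)" by auto
  have "(INF s\<in>{fst p i..fst p (Suc i)}. 1::real) = 1" if "i < snd p" for i
  proof -
    have "fst p i \<le> fst p (Suc i)" using P that unfolding is_partition_def by auto
    then have "{fst p i..fst p (Suc i)} \<noteq> {}" by auto
    then show ?thesis by simp
  qed
  then show "ereal (\<Sum>i<snd p. cmod (g (fst p (Suc i)) - g (fst p i))) =
    ereal (\<Sum>i<snd p. (INF s\<in>{fst p i..fst p (Suc i)}. 1) * cmod (g (fst p (Suc i)) - g (fst p i)))"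
    by simp
qed simp

lemma LS_upper: "is_partition a b t n \<Longrightarrow> ereal (lsum w g t n) \<le> LS w g a b"
  unfolding LS_def by (rule SUP_upper2[where i="(t,n)"]) auto

lemma LS_least: "(\<And>t n. is_partition a b t n \<Longrightarrow> lsum w g t n \<le> X) \<Longrightarrow> LS w g a b \<le> ereal X"
  unfolding LS_def by (rule SUP_least) auto

lemma lterm_nonneg:
  assumes "\<And>z. 0 \<le> w z" "t i \<le> t (Suc i)"
  shows "0 \<le> lterm w g t i"
  unfolding lterm_def using assms by (auto intro!: cINF_greatest mult_nonneg_nonneg)

lemma lsum_nonneg:
  assumes "\<And>z. 0 \<le> w z" "is_partition a b t n"
  shows "0 \<le> lsum w g t n"
  unfolding lsum_def using assms by (auto intro!: sum_nonneg lterm_nonneg simp: is_partition_def)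

lemma triv_partition: "a \<le> b \<Longrightarrow> is_partition a b (\<lambda>i. if i = 0 then a else b) 1"
  unfolding is_partition_def by auto

lemma LS_nonneg:
  assumes "\<And>z. 0 \<le> w z" "a \<le> b"
  shows "0 \<le> LS w g a b"
proof -
  have "ereal (lsum w g (\<lambda>i. if i = 0 then a else b) 1) \<le> LS w g a b"
    using LS_upper triv_partition assms by blast
  moreover have "0 \<le> lsum w g (\<lambda>i. if i = 0 then a else b) 1"
    using lsum_nonneg assms triv_partition by blast
  ultimately show ?thesis by (meson ereal_less_eq(5) order_trans)
qed

lemma LS_chord:
  assumes "\<And>z. 0 \<le> w z" "a \<le> b"
  shows "ereal ((INF s\<in>{a..b}. w (g s)) * cmod (g b - g a)) \<le> LS w g a b"
proof -
  have "ereal (lsum w g (\<lambda>i. if i = 0 then a else b) 1) \<le> LS w g a b"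
    using LS_upper triv_partition assms by blast
  then show ?thesis by (simp add: lsum_def lterm_def)
qed

lemma lsum_Suc: "lsum w g t (Suc n) = lsum w g t n + lterm w g t n"
  unfolding lsum_def by simp

lemma lsum_cong: "(\<And>i. i \<le> n \<Longrightarrow> t i = t' i) \<Longrightarrow> lsum w g t n = lsum w g t' n"
  unfolding lsum_def lterm_def by (intro sum.cong) auto

lemma split_term:
  fixes p b q :: real
  assumes w: "\<And>z. 0 \<le> w z" and "p \<le> b" "b \<le> q"
  shows "(INF s\<in>{p..q}. w (g s)) * cmod (g q - g p) \<le>
         (INF s\<in>{p..b}. w (g s)) * cmod (g b - g p) + (INF s\<in>{b..q}. w (g s)) * cmod (g q - g b)"
proof -
  let ?m = "INF s\<in>{p..q}. w (g s)"
  have bdd: "bdd_below ((\<lambda>s. w (g s)) ` {p..q})" using w by (auto intro: bdd_belowI[where m=0])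
  have m0: "0 \<le> ?m" using assms by (auto intro!: cINF_greatest)
  have m1: "?m \<le> (INF s\<in>{p..b}. w (g s))"
    using assms bdd by (intro cINF_superset_mono) auto
  have m2: "?m \<le> (INF s\<in>{b..q}. w (g s))"
    using assms bdd by (intro cINF_superset_mono) auto
  have "cmod (g q - g p) \<le> cmod (g b - g p) + cmod (g q - g b)"
    using norm_triangle_ineq[of "g b - g p" "g q - g b"] by simp
  then have "?m * cmod (g q - g p) \<le> ?m * (cmod (g b - g p) + cmod (g q - g b))"
    using m0 by (rule mult_left_mono)
  then have "?m * cmod (g q - g p) \<le> ?m * cmod (g b - g p) + ?m * cmod (g q - g b)"
    by (simp add: distrib_left)
  also have "\<dots> \<le> (INF s\<in>{p..b}. w (g s)) * cmod (g b - g p) + (INF s\<in>{b..q}. w (g s)) * cmod (g q - g b)"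
    by (intro add_mono mult_right_mono m1 m2) auto
  finally show ?thesis .
qed

lemma refine:
  assumes w: "\<And>z. 0 \<le> w z"
  shows "is_partition a c t n \<Longrightarrow> a \<le> b \<Longrightarrow> b \<le> c \<Longrightarrow>
    \<exists>t1 n1 t2 n2. is_partition a b t1 n1 \<and> is_partition b c t2 n2 \<and>
       lsum w g t n \<le> lsum w g t1 n1 + lsum w g t2 n2"
proof (induction n arbitrary: c)
  case 0
  then have "a = c" unfolding is_partition_def by auto
  then have "b = a" "c = a" using 0 by auto
  then show ?case
    by (intro exI[of _ "\<lambda>_. a"] exI[of _ 0]) (auto simp: is_partition_def lsum_def)
next
  case (Suc n)
  let ?c = "t n"
  have Pn: "is_partition a ?c t n" using Suc.prems unfolding is_partition_def by auto
  have cc: "?c \<le> c" using Suc.prems unfolding is_partition_def by auto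
  show ?case
  proof (cases "b \<le> ?c")
    case True
    then obtain t1 n1 t2 n2 where P1: "is_partition a b t1 n1" and P2: "is_partition b ?c t2 n2"
      and le: "lsum w g t n \<le> lsum w g t1 n1 + lsum w g t2 n2"
      using Suc.IH[OF Pn] Suc.prems by blast
    define t2' where "t2' = (\<lambda>i. if i \<le> n2 then t2 i else c)"
    have P2': "is_partition b c t2' (Suc n2)"
      unfolding is_partition_def
    proof (intro conjI allI impI)
      fix i assume "i < Suc n2"
      then consider "i < n2" | "i = n2" by linarith
      then show "t2' i \<le> t2' (Suc i)"
        by cases (use P2 cc in \<open>auto simp: t2'_def is_partition_def\<close>)
    qed (use P2 in \<open>auto simp: t2'_def is_partition_def\<close>)
    have "lsum w g t2' (Suc n2) = lsum w g t2 n2 + lterm w g t n"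
    proof -
      have "lsum w g t2' n2 = lsum w g t2 n2" by (rule lsum_cong) (auto simp: t2'_def)
      moreover have "lterm w g t2' n2 = lterm w g t n"
        using P2 Suc.prems unfolding lterm_def t2'_def is_partition_def by auto
      ultimately show ?thesis by (simp add: lsum_Suc)
    qed
    then have "lsum w g t (Suc n) \<le> lsum w g t1 n1 + lsum w g t2' (Suc n2)"
      using le by (simp add: lsum_Suc)
    then show ?thesis using P1 P2' by blast
  next
    case False
    define t1 where "t1 = (\<lambda>i. if i \<le> n then t i else b)"
    define t2 where "t2 = (\<lambda>i::nat. if i = 0 then b else c)"
    have P1: "is_partition a b t1 (Suc n)"
      unfolding is_partition_def
    proof (intro conjI allI impI)
      fix i assume "i < Suc n"
      then consider "i < n" | "i = n" by linarith
      then show "t1 i \<le> t1 (Suc i)"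
        by cases (use Pn False in \<open>auto simp: t1_def is_partition_def\<close>)
    qed (use Pn in \<open>auto simp: t1_def is_partition_def\<close>)
    have P2: "is_partition b c t2 1"
      using Suc.prems unfolding is_partition_def t2_def by auto
    have e1: "lsum w g t1 (Suc n) = lsum w g t n + (INF s\<in>{t n..b}. w (g s)) * cmod (g b - g (t n))"
    proof -
      have "lsum w g t1 n = lsum w g t n" by (rule lsum_cong) (auto simp: t1_def)
      then show ?thesis by (simp add: lsum_Suc lterm_def t1_def)
    qed
    have e2: "lsum w g t2 1 = (INF s\<in>{b..c}. w (g s)) * cmod (g c - g b)"
      by (simp add: lsum_def lterm_def t2_def)
    have tn: "t (Suc n) = c" using Suc.prems unfolding is_partition_def by auto
    have "lterm w g t n \<le> (INF s\<in>{t n..b}. w (g s)) * cmod (g b - g (t n)) + (INF s\<in>{b..c}. w (g s)) * cmod (g c - g b)"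
      unfolding lterm_def tn using split_term[of w "t n" b c g, OF w] False Suc.prems by auto
    then have "lsum w g t (Suc n) \<le> lsum w g t1 (Suc n) + lsum w g t2 1"
      using e1 e2 by (simp add: lsum_Suc)
    then show ?thesis using P1 P2 by blast
  qed
qed

lemma sup_add_le:
  fixes f g :: "'a \<Rightarrow> real" and X :: ereal
  assumes "A \<noteq> {}" "B \<noteq> {}" "\<And>a b. a \<in> A \<Longrightarrow> b \<in> B \<Longrightarrow> ereal (f a) + ereal (g b) \<le> X"
  shows "(SUP a\<in>A. ereal (f a)) + (SUP b\<in>B. ereal (g b)) \<le> X"
proof -
  obtain b0 where b0: "b0 \<in> B" using assms by auto
  have S2: "(SUP b\<in>B. ereal (g b)) \<noteq> -\<infinity>"
    using SUP_upper[OF b0, of "\<lambda>b. ereal (g b)"] by auto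
  have "(SUP a\<in>A. ereal (f a)) + (SUP b\<in>B. ereal (g b)) = (SUP a\<in>A. ereal (f a) + (SUP b\<in>B. ereal (g b)))"
    using SUP_ereal_add_left[OF assms(1) S2] by simp
  also have "\<dots> \<le> X"
  proof (rule SUP_least)
    fix a assume a: "a \<in> A"
    have "ereal (f a) + (SUP b\<in>B. ereal (g b)) = (SUP b\<in>B. ereal (f a) + ereal (g b))"
      by (rule SUP_ereal_add_right[symmetric]) (use assms(2) in auto)
    also have "\<dots> \<le> X" using a assms(3) by (auto intro: SUP_least)
    finally show "ereal (f a) + (SUP b\<in>B. ereal (g b)) \<le> X" .
  qed
  finally show ?thesis .
qed

lemma LS_sub:
  assumes w: "\<And>z. 0 \<le> w z" and "a \<le> b" "b \<le> c"
  shows "LS w g a c \<le> LS w g a b + LS w g b c"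
  unfolding LS_def[of w g a c]
proof (rule SUP_least)
  fix p assume "p \<in> {(t, n). is_partition a c t n}"
  then obtain t n where p: "p = (t, n)" "is_partition a c t n" by auto
  then obtain t1 n1 t2 n2 where "is_partition a b t1 n1" "is_partition b c t2 n2"
       "lsum w g t n \<le> lsum w g t1 n1 + lsum w g t2 n2"
    using refine[of w, OF w] assms by blast
  then have "ereal (lsum w g t n) \<le> ereal (lsum w g t1 n1) + ereal (lsum w g t2 n2)" by simp
  also have "\<dots> \<le> LS w g a b + LS w g b c"
    by (intro add_mono LS_upper) fact+
  finally show "ereal (lsum w g (fst p) (snd p)) \<le> LS w g a b + LS w g b c" using p by simp
qed

definition tconc :: "(nat \<Rightarrow> real) \<Rightarrow> nat \<Rightarrow> (nat \<Rightarrow> real) \<Rightarrow> nat \<Rightarrow> real" where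
  "tconc t1 n1 t2 = (\<lambda>i. if i \<le> n1 then t1 i else t2 (i - n1))"

lemma lsum_tconc:
  assumes "t1 n1 = t2 0"
  shows "lsum w g (tconc t1 n1 t2) (n1 + n2) = lsum w g t1 n1 + lsum w g t2 n2"
proof (induction n2)
  case 0
  show ?case by (simp add: lsum_def) (rule lsum_cong[unfolded lsum_def], simp add: tconc_def)
next
  case (Suc n2)
  have "lterm w g (tconc t1 n1 t2) (n1 + n2) = lterm w g t2 n2"
    using assms unfolding lterm_def tconc_def by (cases n2) (auto simp: Suc_diff_le)
  then show ?case using Suc by (simp add: lsum_Suc)
qed

lemma partition_tconc:
  assumes "is_partition a b t1 n1" "is_partition b c t2 n2"
  shows "is_partition a c (tconc t1 n1 t2) (n1 + n2)"
  unfolding is_partition_def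
proof (intro conjI allI impI)
  fix i assume i: "i < n1 + n2"
  consider "i < n1" | "i = n1" | "i > n1" by linarith
  then show "tconc t1 n1 t2 i \<le> tconc t1 n1 t2 (Suc i)"
  proof cases
    case 1 then show ?thesis using assms by (auto simp: tconc_def is_partition_def)
  next
    case 2
    then have "n2 > 0" using i by auto
    then show ?thesis using assms 2 by (auto simp: tconc_def is_partition_def)
  next
    case 3
    then have "i - n1 < n2" "Suc i - n1 = Suc (i - n1)" using i by auto
    then show ?thesis using assms 3 by (auto simp: tconc_def is_partition_def)
  qed
qed (use assms in \<open>auto simp: tconc_def is_partition_def\<close>)

lemma LS_super:
  assumes w: "\<And>z. 0 \<le> w z" and "a \<le> b" "b \<le> c"
  shows "LS w g a b + LS w g b c \<le> LS w g a c"
  unfolding LS_def[of w g a b] LS_def[of w g b c]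
proof (rule sup_add_le)
  show "{(t, n). is_partition a b t n} \<noteq> {}" using triv_partition[OF assms(2)] by auto
  show "{(t, n). is_partition b c t n} \<noteq> {}" using triv_partition[OF assms(3)] by auto
  fix p1 p2 assume "p1 \<in> {(t, n). is_partition a b t n}" "p2 \<in> {(t, n). is_partition b c t n}"
  then obtain t1 n1 t2 n2 where p: "p1 = (t1, n1)" "p2 = (t2, n2)"
    "is_partition a b t1 n1" "is_partition b c t2 n2" by auto
  then have "t1 n1 = t2 0" unfolding is_partition_def by auto
  then have "ereal (lsum w g t1 n1) + ereal (lsum w g t2 n2) = ereal (lsum w g (tconc t1 n1 t2) (n1 + n2))"
    using lsum_tconc by simp
  also have "\<dots> \<le> LS w g a c" by (rule LS_upper, rule partition_tconc) (use p in auto)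
  finally show "ereal (lsum w g (fst p1) (snd p1)) + ereal (lsum w g (fst p2) (snd p2)) \<le> LS w g a c"
    using p by simp
qed

lemma LS_least': "(\<And>t n. is_partition a b t n \<Longrightarrow> ereal (lsum w g t n) \<le> Y) \<Longrightarrow> LS w g a b \<le> Y"
  unfolding LS_def by (rule SUP_least) auto

lemma LS_cong:
  assumes "\<And>x. a \<le> x \<Longrightarrow> x \<le> b \<Longrightarrow> g x = h x"
  shows "LS w g a b = LS w h a b"
  unfolding LS_def
proof (rule SUP_cong)
  fix p assume "p \<in> {(t, n). is_partition a b t n}"
  then obtain t n where p: "p = (t, n)" "is_partition a b t n" by auto
  have "lterm w g t i = lterm w h t i" if "i < n" for i
  proof -
    have r: "a \<le> t i" "t i \<le> b" "a \<le> t (Suc i)" "t (Suc i) \<le> b"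
      using partition_range[OF p(2), of i] partition_range[OF p(2), of "Suc i"] that by auto
    have "(INF s\<in>{t i..t (Suc i)}. w (g s)) = (INF s\<in>{t i..t (Suc i)}. w (h s))"
      using r assms by (intro INF_cong) auto
    then show ?thesis unfolding lterm_def using r assms by simp
  qed
  then show "ereal (lsum w g (fst p) (snd p)) = ereal (lsum w h (fst p) (snd p))"
    using p unfolding lsum_def by simp
qed simp

lemma LS_aff:
  assumes "c > 0"
  shows "LS w (\<lambda>x. g (c * x + d)) a b \<le> LS w g (c * a + d) (c * b + d)"
proof (rule LS_least')
  fix t n assume P: "is_partition a b t n"
  define t' where "t' = (\<lambda>i. c * t i + d)"
  have P': "is_partition (c * a + d) (c * b + d) t' n"
    using P assms unfolding is_partition_def t'_def by auto
  have "lsum w (\<lambda>x. g (c * x + d)) t n = lsum w g t' n"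
    unfolding lsum_def lterm_def
  proof (rule sum.cong)
    fix i assume "i \<in> {..<n}"
    then have le: "t i \<le> t (Suc i)" using P unfolding is_partition_def by auto
    have im: "(\<lambda>x. c * x + d) ` {t i..t (Suc i)} = {t' i..t' (Suc i)}"
      using le assms unfolding t'_def by (subst image_affinity_atLeastAtMost) auto
    have "(INF s\<in>{t i..t (Suc i)}. w (g (c * s + d))) = (INF s\<in>{t' i..t' (Suc i)}. w (g s))"
      unfolding im[symmetric] by (simp add: image_comp o_def)
    then show "(INF s\<in>{t i..t (Suc i)}. w (g (c * s + d))) * cmod (g (c * t (Suc i) + d) - g (c * t i + d)) =
         (INF s\<in>{t' i..t' (Suc i)}. w (g s)) * cmod (g (t' (Suc i)) - g (t' i))"
      by (simp add: t'_def)
  qed simp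
  then show "ereal (lsum w (\<lambda>x. g (c * x + d)) t n) \<le> LS w g (c * a + d) (c * b + d)"
    using LS_upper[OF P'] by simp
qed

lemma LS_rev:
  "LS w (\<lambda>x. g (e - x)) a b \<le> LS w g (e - b) (e - a)"
proof (rule LS_least')
  fix t n assume P: "is_partition a b t n"
  define t' where "t' = (\<lambda>i. e - t (n - i))"
  have P': "is_partition (e - b) (e - a) t' n"
    unfolding is_partition_def
  proof (intro conjI allI impI)
    fix i assume i: "i < n"
    then have "n - i = Suc (n - Suc i)" by auto
    then show "t' i \<le> t' (Suc i)" using P i unfolding t'_def is_partition_def by auto
  qed (use P in \<open>auto simp: t'_def is_partition_def\<close>)
  have "lsum w (\<lambda>x. g (e - x)) t n = (\<Sum>i<n. lterm w (\<lambda>x. g (e - x)) t (n - Suc i))"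
    unfolding lsum_def by (rule sum.nat_diff_reindex[symmetric])
  also have "\<dots> = lsum w g t' n"
    unfolding lsum_def
  proof (rule sum.cong)
    fix i assume "i \<in> {..<n}"
    then have i: "i < n" by auto
    then have ni: "n - i = Suc (n - Suc i)" by auto
    let ?j = "n - Suc i"
    have le: "t ?j \<le> t (Suc ?j)" using P i unfolding is_partition_def by auto
    have t'i: "t' i = e - t (Suc ?j)" "t' (Suc i) = e - t ?j" using ni unfolding t'_def by auto
    have fe: "(\<lambda>x. e - x) = (\<lambda>x. (-1) * x + e)" by (auto simp: fun_eq_iff)
    have im: "(\<lambda>x. e - x) ` {t ?j..t (Suc ?j)} = {t' i..t' (Suc i)}"
      using le unfolding t'i fe by (subst image_affinity_atLeastAtMost) auto
    have "(INF s\<in>{t ?j..t (Suc ?j)}. w (g (e - s))) = (INF x\<in>(\<lambda>x. e - x) ` {t ?j..t (Suc ?j)}. w (g x))"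
      by (simp only: image_comp o_def)
    also have "\<dots> = (INF s\<in>{t' i..t' (Suc i)}. w (g s))" by (simp only: im)
    finally have "(INF s\<in>{t ?j..t (Suc ?j)}. w (g (e - s))) = (INF s\<in>{t' i..t' (Suc i)}. w (g s))" .
    then show "lterm w (\<lambda>x. g (e - x)) t ?j = lterm w g t' i"
      unfolding lterm_def t'i by (simp add: norm_minus_commute)
  qed simp
  finally show "ereal (lsum w (\<lambda>x. g (e - x)) t n) \<le> LS w g (e - b) (e - a)"
    using LS_upper[OF P'] by simp
qed

lemma LS_cmp:
  assumes w1: "\<And>z. 0 \<le> w1 z" and w2: "\<And>z. 0 \<le> w2 z" and c: "0 \<le> c"
    and le: "\<And>s. a \<le> s \<Longrightarrow> s \<le> b \<Longrightarrow> w1 (g s) \<le> c * w2 (g s)"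
  shows "LS w1 g a b \<le> ereal c * LS w2 g a b"
proof (rule LS_least')
  fix t n assume P: "is_partition a b t n"
  have "lterm w1 g t i \<le> c * lterm w2 g t i" if i: "i < n" for i
  proof -
    have r: "a \<le> t i" "t (Suc i) \<le> b" "t i \<le> t (Suc i)"
      using partition_range[OF P, of i] partition_range[OF P, of "Suc i"] P i
      unfolding is_partition_def by auto
    have bdd1: "bdd_below ((\<lambda>s. w1 (g s)) ` {t i..t (Suc i)})" using w1 by (auto intro: bdd_belowI[where m=0])
    have "(INF s\<in>{t i..t (Suc i)}. w1 (g s)) \<le> c * (INF s\<in>{t i..t (Suc i)}. w2 (g s))"
    proof (cases "c = 0")
      case True
      have "(INF s\<in>{t i..t (Suc i)}. w1 (g s)) \<le> w1 (g (t i))"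
        using r bdd1 by (intro cINF_lower) auto
      also have "\<dots> \<le> 0" using le[of "t i"] r True by auto
      finally show ?thesis using True by simp
    next
      case False
      then have cp: "c > 0" using c by auto
      have "(INF s\<in>{t i..t (Suc i)}. w1 (g s)) / c \<le> (INF s\<in>{t i..t (Suc i)}. w2 (g s))"
      proof (rule cINF_greatest)
        show "{t i..t (Suc i)} \<noteq> {}" using r by auto
        fix s assume s: "s \<in> {t i..t (Suc i)}"
        have "(INF s\<in>{t i..t (Suc i)}. w1 (g s)) \<le> w1 (g s)"
          using s bdd1 by (intro cINF_lower) auto
        also have "\<dots> \<le> c * w2 (g s)" using le[of s] s r by auto
        finally show "(INF s\<in>{t i..t (Suc i)}. w1 (g s)) / c \<le> w2 (g s)"
          using cp by (simp add: divide_le_eq mult.commute)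
      qed
      then show ?thesis using cp by (simp add: divide_le_eq mult.commute)
    qed
    then show ?thesis unfolding lterm_def
      by (metis (no_types, lifting) mult.assoc mult_right_mono norm_ge_zero)
  qed
  then have "lsum w1 g t n \<le> c * lsum w2 g t n"
    unfolding lsum_def sum_distrib_left by (intro sum_mono) auto
  then have "ereal (lsum w1 g t n) \<le> ereal c * ereal (lsum w2 g t n)" by simp
  also have "\<dots> \<le> ereal c * LS w2 g a b"
    using LS_upper[OF P] c by (intro ereal_mult_left_mono) auto
  finally show "ereal (lsum w1 g t n) \<le> ereal c * LS w2 g a b" .
qed

lemma LS_const:
  assumes "\<And>x. a \<le> x \<Longrightarrow> x \<le> b \<Longrightarrow> g x = z"
  shows "LS w g a b \<le> 0"
proof (rule LS_least')
  fix t n assume P: "is_partition a b t n"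
  have "lsum w g t n = 0" unfolding lsum_def lterm_def
    using partition_range[OF P] assms by (intro sum.neutral) auto
  then show "ereal (lsum w g t n) \<le> 0" by simp
qed

lemma LS_line:
  assumes w: "\<And>z. 0 \<le> w z" and M: "\<And>s. a \<le> s \<Longrightarrow> s \<le> b \<Longrightarrow> w (g s) \<le> W"
    and lin: "\<And>u v. a \<le> u \<Longrightarrow> u \<le> v \<Longrightarrow> v \<le> b \<Longrightarrow> cmod (g v - g u) = (v - u) * K"
  shows "LS w g a b \<le> ereal (W * ((b - a) * K))"
proof (rule LS_least)
  fix t n assume P: "is_partition a b t n"
  have "lterm w g t i \<le> W * ((t (Suc i) - t i) * K)" if i: "i < n" for i
  proof -
    have r: "a \<le> t i" "t (Suc i) \<le> b" "t i \<le> t (Suc i)"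
      using partition_range[OF P, of i] partition_range[OF P, of "Suc i"] P i
      unfolding is_partition_def by auto
    have bdd1: "bdd_below ((\<lambda>s. w (g s)) ` {t i..t (Suc i)})" using w by (auto intro: bdd_belowI[where m=0])
    have "(INF s\<in>{t i..t (Suc i)}. w (g s)) \<le> w (g (t i))"
      using r bdd1 by (intro cINF_lower) auto
    also have "\<dots> \<le> W" using M r by auto
    finally show ?thesis unfolding lterm_def using lin[of "t i" "t (Suc i)"] r
      by (metis mult_right_mono norm_ge_zero)
  qed
  then have "lsum w g t n \<le> (\<Sum>i<n. W * ((t (Suc i) - t i) * K))"
    unfolding lsum_def by (intro sum_mono) auto
  also have "\<dots> = W * ((t n - t 0) * K)"
    by (simp add: sum_distrib_left[symmetric] sum_distrib_right[symmetric] sum_lessThan_telescope)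
  finally show "lsum w g t n \<le> W * ((b - a) * K)" using P unfolding is_partition_def by simp
qed

definition adm :: "complex set \<Rightarrow> complex \<Rightarrow> complex \<Rightarrow> (real \<Rightarrow> complex) set" where
  "adm D x y = {g. path g \<and> path_image g \<subseteq> D \<and> pathstart g = x \<and> pathfinish g = y
                  \<and> curve_length g 0 1 < \<infinity>}"

definition Kd :: "complex set \<Rightarrow> complex \<Rightarrow> complex \<Rightarrow> ereal" where
  "Kd D x y = (INF g \<in> adm D x y. qh_length D g 0 1)"

lemma qhdist_Kd: "qhdist D x y = real_of_ereal (Kd D x y)"
  by (simp add: qhdist_def Kd_def adm_def)

lemma bdist_nonneg: "0 \<le> bdist D z" by (simp add: bdist_def infdist_nonneg)

lemma wq_nonneg: "0 \<le> 1 / bdist D z" using bdist_nonneg by simp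

lemma bdist_pos: "open D \<Longrightarrow> D \<noteq> UNIV \<Longrightarrow> z \<in> D \<Longrightarrow> 0 < bdist D z"
  unfolding bdist_def by (rule infdist_pos_not_in_closed) auto

lemma bdist_lip: "bdist D x \<le> bdist D y + dist x y"
  unfolding bdist_def by (rule infdist_triangle)

lemma bdist_lip': "bdist D x \<le> bdist D y + cmod (x - y)"
  using bdist_lip[of D x y] by (simp add: dist_norm)

lemma bdist_ball: "dist x y < bdist D x \<Longrightarrow> y \<in> D"
  unfolding bdist_def using infdist_le[of y "-D" x] by (cases "y \<in> D") auto

lemma qh_nonneg: "a \<le> b \<Longrightarrow> 0 \<le> qh_length D g a b"
  unfolding qh_length_LS by (rule LS_nonneg) (auto simp: bdist_nonneg)

lemma cl_nonneg: "a \<le> b \<Longrightarrow> 0 \<le> curve_length g a b"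
  unfolding curve_length_LS by (rule LS_nonneg) auto

lemma Kd_nonneg: "0 \<le> Kd D x y"
  unfolding Kd_def by (rule INF_greatest) (auto intro: qh_nonneg)

lemma Kd_le: "g \<in> adm D x y \<Longrightarrow> Kd D x y \<le> qh_length D g 0 1"
  unfolding Kd_def by (rule INF_lower)

lemma Kd_fin: "Kd D x y < \<infinity> \<Longrightarrow> Kd D x y = ereal (qhdist D x y)"
  using Kd_nonneg[of D x y] unfolding qhdist_Kd by (cases "Kd D x y") auto

lemma qhdist_nonneg: "0 \<le> qhdist D x y"
  unfolding qhdist_Kd using Kd_nonneg by (simp add: real_of_ereal_pos)

lemma qhdist_le_Kd: "ereal (qhdist D x y) \<le> Kd D x y"
  using Kd_nonneg[of D x y] unfolding qhdist_Kd by (cases "Kd D x y") auto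

lemma cl_le_qh:
  assumes "open D" "D \<noteq> UNIV" "a \<le> b" "continuous_on {a..b} g" "g ` {a..b} \<subseteq> D"
  shows "\<exists>M\<ge>0. curve_length g a b \<le> ereal M * qh_length D g a b"
proof -
  have "compact ((\<lambda>s. bdist D (g s)) ` {a..b})"
    unfolding bdist_def
    by (intro compact_continuous_image continuous_on_infdist assms) auto
  then obtain M0 where "\<forall>x\<in>(\<lambda>s. bdist D (g s)) ` {a..b}. \<bar>x\<bar> \<le> M0"
    using compact_imp_bounded bounded_real by blast
  then have M: "\<And>s. s \<in> {a..b} \<Longrightarrow> bdist D (g s) \<le> M0"
    using abs_le_D1 by blast
  have "0 \<le> M0" using M[of a] bdist_nonneg[of D "g a"] assms(3) by auto
  define M where "M = M0"
  have M: "\<And>s. s \<in> {a..b} \<Longrightarrow> bdist D (g s) \<le> M" using M M_def by auto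
  have "0 \<le> M" using \<open>0 \<le> M0\<close> M_def by simp
  moreover have "curve_length g a b \<le> ereal M * qh_length D g a b"
    unfolding curve_length_LS qh_length_LS
  proof (rule LS_cmp)
    fix s assume s: "a \<le> s" "s \<le> b"
    then have "g s \<in> D" using assms(5) by auto
    then have p: "0 < bdist D (g s)" using bdist_pos[OF assms(1,2)] by auto
    show "1 \<le> M * (1 / bdist D (g s))" using M[of s] s p by (simp add: field_simps)
  qed (use \<open>0 \<le> M\<close> wq_nonneg in auto)
  ultimately show ?thesis by auto
qed

lemma Kd_sub:
  assumes D: "open D" "D \<noteq> UNIV" and ab: "a \<le> b" and g: "continuous_on {a..b} g" "g ` {a..b} \<subseteq> D"
    and fin: "qh_length D g a b < \<infinity>"
  shows "Kd D (g a) (g b) \<le> qh_length D g a b"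
proof (cases "a = b")
  case True
  let ?h = "\<lambda>_::real. g a"
  have "?h \<in> adm D (g a) (g b)"
    unfolding adm_def path_def pathstart_def pathfinish_def path_image_def curve_length_LS
    using True g LS_const[of 0 1 "\<lambda>_. g a" "g a" "\<lambda>z. 1"] by auto
  then have "Kd D (g a) (g b) \<le> qh_length D ?h 0 1" by (rule Kd_le)
  also have "\<dots> \<le> 0" unfolding qh_length_LS by (rule LS_const) auto
  also have "\<dots> \<le> qh_length D g a b" using qh_nonneg[OF ab] .
  finally show ?thesis .
next
  case False
  then have c: "b - a > 0" using ab by auto
  let ?h = "\<lambda>u. g ((b - a) * u + a)"
  have im: "(\<lambda>u. (b - a) * u + a) ` {0..1} = {a..b}"
    using c by (subst image_affinity_atLeastAtMost) auto
  have hc: "continuous_on {0..1} ?h"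
    by (rule continuous_on_compose2[OF g(1)]) (auto intro!: continuous_intros simp: im[symmetric])
  have hi: "?h ` {0..1} \<subseteq> D" using g(2) im by auto
  have qle: "qh_length D ?h 0 1 \<le> qh_length D g a b"
    using LS_aff[OF c, of "\<lambda>z. 1 / bdist D z" g a 0 1] unfolding qh_length_LS by simp
  obtain M where M: "M \<ge> 0" "curve_length ?h 0 1 \<le> ereal M * qh_length D ?h 0 1"
    using cl_le_qh[OF D _ hc hi] by auto
  have "qh_length D ?h 0 1 < \<infinity>" using qle fin by auto
  then have "curve_length ?h 0 1 < \<infinity>" using M qh_nonneg[of 0 1 D ?h]
    by (cases "qh_length D ?h 0 1") (auto simp: le_less_trans)
  then have "?h \<in> adm D (g a) (g b)"
    unfolding adm_def path_def pathstart_def pathfinish_def path_image_def using hc hi by auto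
  then show ?thesis using Kd_le qle order_trans by blast
qed

lemma reversepath_eq: "reversepath g = (\<lambda>x. g (1 - x))"
  by (simp add: reversepath_def fun_eq_iff)

lemma Kd_sym_le: "Kd D y x \<le> Kd D x y"
  unfolding Kd_def[of D x y]
proof (rule INF_greatest)
  fix g assume g: "g \<in> adm D x y"
  have r: "reversepath g \<in> adm D y x"
  proof -
    have "curve_length (reversepath g) 0 1 \<le> curve_length g 0 1"
      unfolding reversepath_eq curve_length_LS using LS_rev[of "\<lambda>z. 1" g 1 0 1] by simp
    then show ?thesis using g unfolding adm_def by auto
  qed
  have "qh_length D (reversepath g) 0 1 \<le> qh_length D g 0 1"
    unfolding reversepath_eq qh_length_LS using LS_rev[of _ g 1 0 1] by simp
  then show "Kd D y x \<le> qh_length D g 0 1" using Kd_le[OF r] by auto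
qed

lemma Kd_sym: "Kd D y x = Kd D x y"
  using Kd_sym_le by (metis antisym)

lemma qhdist_sym: "qhdist D y x = qhdist D x y"
  unfolding qhdist_Kd using Kd_sym by metis

lemma LS_join:
  assumes w: "\<And>z. 0 \<le> w z" and e: "pathfinish g1 = pathstart g2"
  shows "LS w (g1 +++ g2) 0 1 \<le> LS w g1 0 1 + LS w g2 0 1"
proof -
  have "LS w (g1 +++ g2) 0 1 \<le> LS w (g1 +++ g2) 0 (1/2) + LS w (g1 +++ g2) (1/2) 1"
    by (rule LS_sub[OF w]) auto
  also have "LS w (g1 +++ g2) 0 (1/2) \<le> LS w g1 0 1"
  proof -
    have "LS w (g1 +++ g2) 0 (1/2) = LS w (\<lambda>x. g1 (2 * x + 0)) 0 (1/2)"
      by (rule LS_cong) (auto simp: joinpaths_def)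
    also have "\<dots> \<le> LS w g1 (2 * 0 + 0) (2 * (1/2) + 0)" by (rule LS_aff) auto
    finally show ?thesis by simp
  qed
  also have "LS w (g1 +++ g2) (1/2) 1 \<le> LS w g2 0 1"
  proof -
    have "LS w (g1 +++ g2) (1/2) 1 = LS w (\<lambda>x. g2 (2 * x + (-1))) (1/2) 1"
    proof (rule LS_cong)
      fix x :: real assume x: "1/2 \<le> x" "x \<le> 1"
      show "(g1 +++ g2) x = g2 (2 * x + (-1))"
      proof (cases "x = 1/2")
        case True then show ?thesis unfolding True using e by (simp add: joinpaths_def pathfinish_def pathstart_def)
      next
        case False then show ?thesis using x by (simp add: joinpaths_def)
      qed
    qed
    also have "\<dots> \<le> LS w g2 (2 * (1/2) + (-1)) (2 * 1 + (-1))" by (rule LS_aff) auto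
    finally show ?thesis by simp
  qed
  finally show ?thesis by (simp add: add_mono)
qed

lemma Kd_tri: "Kd D x z \<le> Kd D x y + Kd D y z"
proof (cases "Kd D x y = \<infinity> \<or> Kd D y z = \<infinity>")
  case True
  then show ?thesis using Kd_nonneg[of D x y] Kd_nonneg[of D y z] by auto
next
  case False
  then have f1: "Kd D x y < \<infinity>" and f2: "Kd D y z < \<infinity>" by (auto simp: less_top)
  show ?thesis
  proof (rule ereal_le_epsilon2)
    fix e :: real assume e: "0 < e"
    have "Kd D x y < Kd D x y + ereal (e/2)" using f1 e Kd_nonneg[of D x y]
      by (cases "Kd D x y") auto
    then obtain g1 where g1: "g1 \<in> adm D x y" "qh_length D g1 0 1 < Kd D x y + ereal (e/2)"
      unfolding Kd_def[of D x y] by (auto simp: INF_less_iff)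
    have "Kd D y z < Kd D y z + ereal (e/2)" using f2 e Kd_nonneg[of D y z]
      by (cases "Kd D y z") auto
    then obtain g2 where g2: "g2 \<in> adm D y z" "qh_length D g2 0 1 < Kd D y z + ereal (e/2)"
      unfolding Kd_def[of D y z] by (auto simp: INF_less_iff)
    have e12: "pathfinish g1 = pathstart g2" using g1 g2 unfolding adm_def by auto
    have "curve_length (g1 +++ g2) 0 1 \<le> curve_length g1 0 1 + curve_length g2 0 1"
      unfolding curve_length_LS by (rule LS_join[OF _ e12]) auto
    moreover have "curve_length g1 0 1 < \<infinity>" "curve_length g2 0 1 < \<infinity>"
      using g1 g2 unfolding adm_def by auto
    ultimately have "curve_length (g1 +++ g2) 0 1 < \<infinity>"
      using cl_nonneg[of 0 1 g1] cl_nonneg[of 0 1 g2]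
      by (cases "curve_length g1 0 1"; cases "curve_length g2 0 1") auto
    then have j: "g1 +++ g2 \<in> adm D x z"
      using g1 g2 e12 path_image_join_subset[of g1 g2] unfolding adm_def by auto
    have "Kd D x z \<le> qh_length D (g1 +++ g2) 0 1" by (rule Kd_le[OF j])
    also have "\<dots> \<le> qh_length D g1 0 1 + qh_length D g2 0 1"
      unfolding qh_length_LS by (rule LS_join[OF _ e12]) (simp add: bdist_nonneg)
    also have "\<dots> \<le> (Kd D x y + ereal (e/2)) + (Kd D y z + ereal (e/2))"
      using g1 g2 by (intro add_mono) auto
    also have "\<dots> = Kd D x y + Kd D y z + ereal e"
      using f1 f2 Kd_nonneg[of D x y] Kd_nonneg[of D y z]
      by (cases "Kd D x y"; cases "Kd D y z") auto
    finally show "Kd D x z \<le> Kd D x y + Kd D y z + ereal e" .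
  qed
qed

lemma linepath_eq: "linepath y z s = y + complex_of_real s * (z - y)"
  unfolding linepath_def scaleR_conv_of_real by (simp add: algebra_simps)

lemma Kd_seg:
  assumes D: "open D" "D \<noteq> UNIV" "y \<in> D" and yz: "cmod (z - y) \<le> bdist D y / 2"
  shows "Kd D y z \<le> ereal (2 / bdist D y * cmod (z - y))"
proof -
  let ?d = "bdist D y"
  let ?l = "linepath y z"
  have dp: "0 < ?d" using bdist_pos D by auto
  have ls: "cmod (?l s - y) = s * cmod (z - y)" if "0 \<le> s" for s
    using that by (simp add: linepath_eq norm_mult)
  have inD: "?l s \<in> D" and dl: "?d / 2 \<le> bdist D (?l s)" if "0 \<le> s" "s \<le> 1" for s
  proof -
    have "s * cmod (z - y) \<le> cmod (z - y)" using that by (simp add: mult_left_le_one_le)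
    then have c: "cmod (?l s - y) \<le> ?d / 2" using ls[of s] that yz by linarith
    then have "dist y (?l s) < ?d" using dp by (simp add: dist_norm norm_minus_commute)
    then show "?l s \<in> D" by (rule bdist_ball)
    have "?d \<le> bdist D (?l s) + cmod (y - ?l s)" by (rule bdist_lip')
    then show "?d / 2 \<le> bdist D (?l s)" using c by (simp add: norm_minus_commute)
  qed
  have lin: "cmod (?l v - ?l u) = (v - u) * cmod (z - y)" if "u \<le> v" for u v
  proof -
    have "?l v - ?l u = complex_of_real (v - u) * (z - y)" by (simp add: linepath_eq algebra_simps)
    then have "cmod (?l v - ?l u) = \<bar>v - u\<bar> * cmod (z - y)" by (simp only: norm_mult norm_of_real)
    then show ?thesis using that by simp
  qed
  have cl: "curve_length ?l 0 1 \<le> ereal (1 * ((1 - 0) * cmod (z - y)))"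
    unfolding curve_length_LS by (rule LS_line) (auto simp: lin)
  have adm: "?l \<in> adm D y z"
    unfolding adm_def using cl inD by (auto simp: path_image_def le_less_trans)
  have "qh_length D ?l 0 1 \<le> ereal (2 / ?d * ((1 - 0) * cmod (z - y)))"
    unfolding qh_length_LS
  proof (rule LS_line)
    fix s :: real assume s: "0 \<le> s" "s \<le> 1"
    have "0 < bdist D (?l s)" using dl[OF s] dp by linarith
    then show "1 / bdist D (?l s) \<le> 2 / ?d" using dl[OF s] dp by (simp add: field_simps)
  qed (auto simp: lin bdist_nonneg)
  then show ?thesis using Kd_le[OF adm] by auto
qed

lemma Kd_refl: "open D \<Longrightarrow> D \<noteq> UNIV \<Longrightarrow> y \<in> D \<Longrightarrow> Kd D y y \<le> 0"
  using Kd_seg[of D y y] bdist_pos[of D y] by (simp add: zero_ereal_def)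

lemma Kd_finite:
  assumes D: "open D" "D \<noteq> UNIV" "connected D" and xy: "x \<in> D" "y \<in> D"
  shows "Kd D x y < \<infinity>"
proof -
  define U where "U = {w\<in>D. Kd D x w < \<infinity>}"
  define V where "V = {w\<in>D. Kd D x w = \<infinity>}"
  have near: "Kd D w w' \<le> 1" "w' \<in> D" if "w \<in> D" "w' \<in> ball w (bdist D w / 2)" for w w'
  proof -
    have dp: "0 < bdist D w" using bdist_pos D that by auto
    have c: "cmod (w' - w) \<le> bdist D w / 2" using that by (simp add: dist_norm norm_minus_commute)
    have "Kd D w w' \<le> ereal (2 / bdist D w * cmod (w' - w))" by (rule Kd_seg) (use D that c in auto)
    also have "2 / bdist D w * cmod (w' - w) \<le> 1" using c dp by (simp add: field_simps)
    finally show "Kd D w w' \<le> 1" by (simp add: one_ereal_def)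
    show "w' \<in> D" using that dp by (intro bdist_ball[of w]) auto
  qed
  have "open U"
  proof (rule openI)
    fix w assume w: "w \<in> U"
    have "ball w (bdist D w / 2) \<subseteq> U"
    proof
      fix w' assume w': "w' \<in> ball w (bdist D w / 2)"
      have "Kd D x w' \<le> Kd D x w + Kd D w w'" by (rule Kd_tri)
      also have "\<dots> \<le> Kd D x w + 1" using near w w' unfolding U_def by (intro add_mono) auto
      also have "\<dots> < \<infinity>" using w unfolding U_def by (simp add: less_top[symmetric])
      finally show "w' \<in> U" using near w w' unfolding U_def by auto
    qed
    moreover have "0 < bdist D w / 2" using bdist_pos D w unfolding U_def by auto
    ultimately show "\<exists>e>0. ball w e \<subseteq> U" by blast
  qed
  have "open V"
  proof (rule openI)
    fix w assume w: "w \<in> V"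
    have "ball w (bdist D w / 2) \<subseteq> V"
    proof
      fix w' assume w': "w' \<in> ball w (bdist D w / 2)"
      have "Kd D x w \<le> Kd D x w' + Kd D w' w" by (rule Kd_tri)
      also have "Kd D w' w = Kd D w w'" by (rule Kd_sym)
      also have "Kd D x w' + \<dots> \<le> Kd D x w' + 1" using near w w' unfolding V_def by (intro add_mono) auto
      finally have "Kd D x w' = \<infinity>" using w unfolding V_def by auto
      then show "w' \<in> V" using near w w' unfolding V_def by auto
    qed
    moreover have "0 < bdist D w / 2" using bdist_pos D w unfolding V_def by auto
    ultimately show "\<exists>e>0. ball w e \<subseteq> V" by blast
  qed
  have "U \<inter> D = {} \<or> V \<inter> D = {}"
    by (rule connectedD[OF D(3) \<open>open U\<close> \<open>open V\<close>]) (auto simp: U_def V_def less_top)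
  moreover have "x \<in> U \<inter> D" using Kd_refl[OF D(1,2) xy(1)] xy unfolding U_def by auto
  ultimately have "V \<inter> D = {}" by auto
  then show ?thesis using xy unfolding V_def by (auto simp: less_top)
qed

lemma Kd_ball:
  assumes D: "open D" "D \<noteq> UNIV" "x0 \<in> D" and K: "Kd D x0 w < ereal (1/2)"
  shows "cmod (w - x0) \<le> bdist D x0"
proof -
  let ?d = "bdist D x0"
  have dp: "0 < ?d" using bdist_pos D by auto
  obtain g where g: "g \<in> adm D x0 w" "qh_length D g 0 1 < ereal (1/2)"
    using K unfolding Kd_def by (auto simp: INF_less_iff)
  have gc: "continuous_on {0..1} g" and gi: "\<And>s. s \<in> {0..1} \<Longrightarrow> g s \<in> D"
    and g0: "g 0 = x0" and g1: "g 1 = w"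
    using g(1) unfolding adm_def path_def path_image_def pathstart_def pathfinish_def by auto
  obtain q where q: "qh_length D g 0 1 = ereal q" "0 \<le> q" "q < 1/2"
    using g(2) qh_nonneg[of 0 1 D g] by (cases "qh_length D g 0 1") auto
  have "continuous_on {0..1} (\<lambda>s. cmod (g s - x0))" by (intro continuous_intros gc)
  from continuous_attains_sup[OF compact_Icc _ this]
  obtain xm where xm: "xm \<in> {0..1}" "\<And>y. y \<in> {0..1} \<Longrightarrow> cmod (g y - x0) \<le> cmod (g xm - x0)"
    by auto
  define Dm where "Dm = cmod (g xm - x0)"
  have Dm0: "0 \<le> Dm" unfolding Dm_def by simp
  have bound: "cmod (g x - x0) \<le> q * (?d + Dm)" if x: "x \<in> {0..1}" for x
  proof -
    have "qh_length D g 0 x + qh_length D g x 1 \<le> qh_length D g 0 1"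
      unfolding qh_length_LS by (rule LS_super) (use x in \<open>auto simp: bdist_nonneg\<close>)
    moreover have "0 \<le> qh_length D g x 1" using x by (intro qh_nonneg) auto
    ultimately have "qh_length D g 0 x \<le> ereal q" using q
      by (metis add.right_neutral add_left_mono order_trans)
    moreover have "ereal ((INF s\<in>{0..x}. 1 / bdist D (g s)) * cmod (g x - g 0)) \<le> qh_length D g 0 x"
      unfolding qh_length_LS by (rule LS_chord) (use x in \<open>auto simp: bdist_nonneg\<close>)
    ultimately have "ereal ((INF s\<in>{0..x}. 1 / bdist D (g s)) * cmod (g x - g 0)) \<le> ereal q"
      by (meson order_trans)
    then have le: "(INF s\<in>{0..x}. 1 / bdist D (g s)) * cmod (g x - g 0) \<le> q" by simp
    have inf: "1 / (?d + Dm) \<le> (INF s\<in>{0..x}. 1 / bdist D (g s))"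
    proof (rule cINF_greatest)
      show "{0..x} \<noteq> {}" using x by auto
      fix s assume s: "s \<in> {0..x}"
      then have sD: "g s \<in> D" using gi x by auto
      have p: "0 < bdist D (g s)" using bdist_pos[OF D(1,2) sD] .
      have "bdist D (g s) \<le> ?d + cmod (g s - x0)" using bdist_lip'[of D "g s" x0] by simp
      also have "\<dots> \<le> ?d + Dm" using xm(2)[of s] s x unfolding Dm_def by auto
      finally show "1 / (?d + Dm) \<le> 1 / bdist D (g s)" using p by (simp add: frac_le)
    qed
    have "cmod (g x - x0) / (?d + Dm) \<le> (INF s\<in>{0..x}. 1 / bdist D (g s)) * cmod (g x - g 0)"
      using mult_right_mono[OF inf, of "cmod (g x - g 0)"] g0 by simp
    then have "cmod (g x - x0) / (?d + Dm) \<le> q" using le by linarith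
    then show ?thesis using dp Dm0 by (simp add: field_simps)
  qed
  have "Dm \<le> q * (?d + Dm)" using bound[OF xm(1)] unfolding Dm_def .
  then have "Dm \<le> ?d"
  proof -
    assume h: "Dm \<le> q * (?d + Dm)"
    have "q * (?d + Dm) \<le> (1/2) * (?d + Dm)" using q dp Dm0 by (intro mult_right_mono) auto
    moreover have "(1/2) * (?d + Dm) = ?d/2 + Dm/2" by (simp add: algebra_simps)
    ultimately show ?thesis using h by linarith
  qed
  moreover have "cmod (w - x0) \<le> Dm" using xm(2)[of 1] g1 unfolding Dm_def by auto
  ultimately show ?thesis by linarith
qed

lemma qhdist_lip:
  assumes D: "open D" "D \<noteq> UNIV" "connected D" "x0 \<in> D" "w \<in> D"
    and w': "cmod (w' - w) \<le> bdist D w / 2"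
  shows "\<bar>qhdist D w' x0 - qhdist D w x0\<bar> \<le> 2 / bdist D w * cmod (w' - w)"
proof -
  have dp: "0 < bdist D w" using bdist_pos D by auto
  have w'D: "w' \<in> D" using w' dp by (intro bdist_ball[of w]) (auto simp: dist_norm norm_minus_commute)
  have s: "Kd D w w' \<le> ereal (2 / bdist D w * cmod (w' - w))" by (rule Kd_seg) (use D w' in auto)
  have f1: "Kd D w x0 = ereal (qhdist D w x0)" by (rule Kd_fin, rule Kd_finite) (use D w'D in auto)
  have f2: "Kd D w' x0 = ereal (qhdist D w' x0)" by (rule Kd_fin, rule Kd_finite) (use D w'D in auto)
  have f3: "Kd D w w' = ereal (qhdist D w w')" by (rule Kd_fin, rule Kd_finite) (use D w'D in auto)
  have a: "Kd D w' x0 \<le> Kd D w' w + Kd D w x0" by (rule Kd_tri)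
  have b: "Kd D w x0 \<le> Kd D w w' + Kd D w' x0" by (rule Kd_tri)
  have "qhdist D w w' \<le> 2 / bdist D w * cmod (w' - w)" using s f3 by simp
  moreover have "qhdist D w' x0 \<le> qhdist D w w' + qhdist D w x0" using a f1 f2 f3 Kd_sym[of D w' w] by simp
  moreover have "qhdist D w x0 \<le> qhdist D w w' + qhdist D w' x0" using b f1 f2 f3 by simp
  ultimately show ?thesis by linarith
qed

lemma qhdist_cont:
  assumes D: "open D" "D \<noteq> UNIV" "connected D" "x0 \<in> D"
  shows "continuous_on D (\<lambda>w. qhdist D w x0)"
  unfolding continuous_on_iff
proof (intro ballI allI impI)
  fix w e assume w: "w \<in> D" and e: "(0::real) < e"
  have dp: "0 < bdist D w" using bdist_pos D w by auto
  define d where "d = min (bdist D w / 2) (e * bdist D w / 4)"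
  have d: "0 < d" using dp e unfolding d_def by auto
  show "\<exists>d>0. \<forall>x'\<in>D. dist x' w < d \<longrightarrow> dist (qhdist D x' x0) (qhdist D w x0) < e"
  proof (intro exI[of _ d] conjI ballI impI d)
    fix x' assume x': "x' \<in> D" "dist x' w < d"
    have c: "cmod (x' - w) < d" using x' by (simp add: dist_norm)
    have "\<bar>qhdist D x' x0 - qhdist D w x0\<bar> \<le> 2 / bdist D w * cmod (x' - w)"
      by (rule qhdist_lip) (use D w c in \<open>auto simp: d_def\<close>)
    also have "\<dots> < 2 / bdist D w * d" using c dp by (intro mult_strict_left_mono) auto
    also have "\<dots> \<le> e / 2" using dp unfolding d_def by (simp add: field_simps min_def)
    finally show "dist (qhdist D x' x0) (qhdist D w x0) < e" using e by (simp add: dist_real_def)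
  qed
qed

lemma qhdist_meas:
  assumes D: "open D" "D \<noteq> UNIV" "connected D" "x0 \<in> D"
  shows "(\<lambda>x. ennreal ((qhdist D x x0)\<^sup>2) * indicator D x) \<in> borel_measurable lborel"
proof -
  have "continuous_on D (\<lambda>x. (qhdist D x x0)\<^sup>2)"
    using qhdist_cont[OF D] by (intro continuous_intros)
  then have m: "(\<lambda>x. indicator D x *\<^sub>R (qhdist D x x0)\<^sup>2) \<in> borel_measurable borel"
    using D(1) by (intro borel_measurable_continuous_on_indicator) auto
  have eq: "(\<lambda>x. ennreal ((qhdist D x x0)\<^sup>2) * indicator D x) = (\<lambda>x. ennreal (indicator D x *\<^sub>R (qhdist D x x0)\<^sup>2))"
    by (auto simp: fun_eq_iff indicator_def)
  show ?thesis unfolding eq using m by (simp add: measurable_lborel1)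
qed

lemma LS_mono_int:
  assumes w: "\<And>z. 0 \<le> w z" and "a \<le> x" "x \<le> y" "y \<le> b"
  shows "LS w g x y \<le> LS w g a b"
proof -
  have "LS w g a x + LS w g x y \<le> LS w g a y" by (rule LS_super[OF w]) (use assms in auto)
  moreover have "0 \<le> LS w g a x" by (rule LS_nonneg[OF w]) (use assms in auto)
  ultimately have 1: "LS w g x y \<le> LS w g a y"
    by (metis add_increasing order_refl order_trans)
  have "LS w g a y + LS w g y b \<le> LS w g a b" by (rule LS_super[OF w]) (use assms in auto)
  moreover have "0 \<le> LS w g y b" by (rule LS_nonneg[OF w]) (use assms in auto)
  ultimately have "LS w g a y \<le> LS w g a b"
    by (metis add_increasing2 order_refl order_trans)
  then show ?thesis using 1 by auto
qed

lemma LS_chain_super: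
  assumes w: "\<And>z. 0 \<le> w z" and p: "\<And>k. p k \<le> p (Suc k)"
  shows "i \<le> j \<Longrightarrow> (\<Sum>k\<in>{i..<j}. LS w g (p k) (p (Suc k))) \<le> LS w g (p i) (p j)"
proof (induction j)
  case 0 then show ?case using LS_nonneg[OF w] by simp
next
  case (Suc j)
  have mono: "p i \<le> p j" if "i \<le> j" for j using that
    by (induction j) (auto intro: order_trans[OF _ p] simp: le_Suc_eq)
  show ?case
  proof (cases "i = Suc j")
    case True then show ?thesis using LS_nonneg[OF w] by simp
  next
    case False
    then have ij: "i \<le> j" using Suc by auto
    have "(\<Sum>k\<in>{i..<Suc j}. LS w g (p k) (p (Suc k))) =
          (\<Sum>k\<in>{i..<j}. LS w g (p k) (p (Suc k))) + LS w g (p j) (p (Suc j))"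
      using ij by simp
    also have "\<dots> \<le> LS w g (p i) (p j) + LS w g (p j) (p (Suc j))"
      using Suc.IH[OF ij] by (rule add_right_mono)
    also have "\<dots> \<le> LS w g (p i) (p (Suc j))"
      by (rule LS_super[OF w]) (use mono[OF ij] p in auto)
    finally show ?thesis .
  qed
qed

lemma LS_chain_sub:
  assumes w: "\<And>z. 0 \<le> w z" and p: "\<And>k. p k \<le> p (Suc k)"
  shows "LS w g (p 0) (p j) \<le> (\<Sum>k<j. LS w g (p k) (p (Suc k)))"
proof (induction j)
  case 0 then show ?case by simp (rule LS_const[where z="g (p 0)"], auto)
next
  case (Suc j)
  have mono: "p 0 \<le> p j" for j
    by (induction j) (auto intro: order_trans[OF _ p])
  have "LS w g (p 0) (p (Suc j)) \<le> LS w g (p 0) (p j) + LS w g (p j) (p (Suc j))"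
    by (rule LS_sub[OF w]) (use mono p in auto)
  also have "\<dots> \<le> (\<Sum>k<j. LS w g (p k) (p (Suc k))) + LS w g (p j) (p (Suc j))"
    using Suc.IH by (rule add_right_mono)
  finally show ?case by simp
qed

lemma ball_measure:
  fixes c :: complex assumes r: "0 < r"
  shows "ennreal (r\<^sup>2 / 4) \<le> emeasure lborel (ball c r)"
proof -
  let ?v = "Complex (r/4) (r/4)"
  have sub: "cbox (c - ?v) (c + ?v) \<subseteq> ball c r"
  proof
    fix x assume "x \<in> cbox (c - ?v) (c + ?v)"
    then have b: "Re c - r/4 \<le> Re x" "Re x \<le> Re c + r/4" "Im c - r/4 \<le> Im x" "Im x \<le> Im c + r/4"
      unfolding in_cbox_complex_iff by auto
    have a: "\<bar>Re (x - c)\<bar> \<le> r/4" "\<bar>Im (x - c)\<bar> \<le> r/4"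
      unfolding abs_le_iff minus_complex.sel using b by (intro conjI; linarith)+
    have "cmod (x - c) \<le> \<bar>Re (x - c)\<bar> + \<bar>Im (x - c)\<bar>" by (rule cmod_le)
    then have "cmod (x - c) < r" using a r by linarith
    then show "x \<in> ball c r" by (simp add: dist_norm norm_minus_commute)
  qed
  have "emeasure lborel (cbox (c - ?v) (c + ?v)) = ennreal (r\<^sup>2 / 4)"
    using r by (simp add: emeasure_lborel_cbox_eq Basis_complex_def power2_eq_square
        ennreal_mult[symmetric] field_simps)
  then show ?thesis using emeasure_mono[OF sub] by (metis sets_lborel sets.Int_space_eq1 measurable_sets_borel
      emeasure_mono open_ball borel_open)
qed

lemma amgm:
  fixes d L lam a :: real
  assumes "0 < lam" "0 < a" "0 \<le> L"
  shows "2 * d * L \<le> lam * (L * a * d\<^sup>2) + (1 / lam) * (L / a)"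
proof -
  have "0 \<le> (lam * a * d - 1)\<^sup>2" by simp
  then have "0 \<le> (lam * a * d - 1)\<^sup>2 / (lam * a)" using assms by simp
  then have "0 \<le> lam * a * d\<^sup>2 - 2 * d + 1 / (lam * a)"
    using assms by (simp add: power2_eq_square field_simps)
  then have "0 \<le> L * (lam * a * d\<^sup>2 - 2 * d + 1 / (lam * a))" using assms by simp
  then show ?thesis by (simp add: algebra_simps)
qed

lemma tele_step:
  fixes a b L :: real
  assumes "1 \<le> a" "0 \<le> L" "L \<le> 3/2" "a + L \<le> b"
  shows "L / a\<^sup>2 \<le> 3 * (1 / a - 1 / b)"
proof -
  have "1 / b \<le> 1 / (a + L)" using assms by (intro divide_left_mono) auto
  moreover have "1 / a - 1 / (a + L) = L / (a * (a + L))" using assms by (simp add: field_simps)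
  moreover have "L / a\<^sup>2 \<le> 3 * (L / (a * (a + L)))"
  proof -
    have "a + L \<le> 3 * a" using assms by auto
    then have le: "L * (a + L) \<le> 3 * L * a" using assms by (metis mult.assoc mult.commute mult_left_mono)
    have p: "0 < a\<^sup>2 * (a + L)" using assms by simp
    have ne: "a + L \<noteq> 0" using assms by auto
    have "L / a\<^sup>2 = L * (a + L) / (a\<^sup>2 * (a + L))" using nonzero_mult_divide_mult_cancel_right[OF ne, of L "a\<^sup>2"] by simp
    also have "\<dots> \<le> 3 * L * a / (a\<^sup>2 * (a + L))" using le p by (intro divide_right_mono) auto
    also have "3 * L * a / (a\<^sup>2 * (a + L)) = (3 * L) * a / ((a * (a + L)) * a)"
      by (simp add: power2_eq_square mult_ac)
    also have "\<dots> = (3 * L) / (a * (a + L))"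
      using assms by (intro nonzero_mult_divide_mult_cancel_right) auto
    also have "\<dots> = 3 * (L / (a * (a + L)))" by simp
    finally show ?thesis .
  qed
  ultimately show ?thesis
  proof -
    assume h1: "1 / b \<le> 1 / (a + L)" and h2: "1 / a - 1 / (a + L) = L / (a * (a + L))"
      and h3: "L / a\<^sup>2 \<le> 3 * (L / (a * (a + L)))"
    have "L / (a * (a + L)) \<le> 1 / a - 1 / b" using h1 h2 by linarith
    then have "3 * (L / (a * (a + L))) \<le> 3 * (1 / a - 1 / b)" by simp
    then show ?thesis using h3 by linarith
  qed
qed

definition Gfun :: "complex set \<Rightarrow> complex \<Rightarrow> complex \<Rightarrow> ennreal" where
  "Gfun D x0 w = 74 * (ennreal ((qhdist D w x0)\<^sup>2) * indicator D w) + 18 * indicator (cball x0 (bdist D x0)) w"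

definition Cst :: "complex set \<Rightarrow> complex \<Rightarrow> real" where
  "Cst D x0 = 80 * enn2real (\<integral>\<^sup>+ w. Gfun D x0 w \<partial>lborel) + 3"

lemma Cst_pos: "0 < Cst D x0"
  unfolding Cst_def using enn2real_nonneg[of "\<integral>\<^sup>+ w. Gfun D x0 w \<partial>lborel"] by linarith

lemma IG_fin:
  assumes D: "open D" "D \<noteq> UNIV" "connected D" "x0 \<in> D"
    and A: "(\<integral>\<^sup>+ x. ennreal ((qhdist D x x0)\<^sup>2) * indicator D x \<partial>lborel) < \<infinity>"
  shows "(\<integral>\<^sup>+ w. Gfun D x0 w \<partial>lborel) < \<infinity>"
proof -
  have mf: "(\<lambda>x. ennreal ((qhdist D x x0)\<^sup>2) * indicator D x) \<in> borel_measurable lborel"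
    by (rule qhdist_meas[OF D])
  have m1: "(\<lambda>w. 74 * (ennreal ((qhdist D w x0)\<^sup>2) * indicator D w)) \<in> borel_measurable lborel"
    by (rule borel_measurable_times_ennreal[OF borel_measurable_const mf])
  have m2: "(\<lambda>w. 18 * indicator (cball x0 (bdist D x0)) w :: ennreal) \<in> borel_measurable lborel"
    by (rule borel_measurable_times_ennreal[OF borel_measurable_const borel_measurable_indicator]) simp
  have "(\<integral>\<^sup>+ w. Gfun D x0 w \<partial>lborel) =
     (\<integral>\<^sup>+ w. 74 * (ennreal ((qhdist D w x0)\<^sup>2) * indicator D w) \<partial>lborel) +
     (\<integral>\<^sup>+ w. 18 * indicator (cball x0 (bdist D x0)) w \<partial>lborel)"
    unfolding Gfun_def by (rule nn_integral_add[OF m1 m2])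
  also have "\<dots> = 74 * (\<integral>\<^sup>+ x. ennreal ((qhdist D x x0)\<^sup>2) * indicator D x \<partial>lborel) +
      18 * emeasure lborel (cball x0 (bdist D x0))"
    using mf by (subst nn_integral_cmult) (auto simp: nn_integral_cmult_indicator)
  also have "\<dots> < \<infinity>"
    using A emeasure_bounded_finite[OF bounded_cball, of x0 "bdist D x0"]
    by (simp add: ennreal_mult_less_top)
  finally show ?thesis .
qed

lemma G_point:
  assumes D: "open D" "D \<noteq> UNIV" "connected D" "x0 \<in> D" and w: "w \<in> D"
  shows "ennreal ((qhdist D w x0 + 3)\<^sup>2) \<le> Gfun D x0 w"
proof -
  let ?k = "qhdist D w x0"
  have k0: "0 \<le> ?k" by (rule qhdist_nonneg)
  show ?thesis
  proof (cases "?k \<ge> 1/2")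
    case True
    have "?k + 3 \<le> 7 * ?k" using True by linarith
    then have "(?k + 3)\<^sup>2 \<le> (7 * ?k)\<^sup>2" using k0 by (intro power_mono) auto
    moreover have "(7 * ?k)\<^sup>2 \<le> 74 * ?k\<^sup>2" by (simp add: power_mult_distrib)
    ultimately have "(?k + 3)\<^sup>2 \<le> 74 * ?k\<^sup>2" by linarith
    then have "ennreal ((?k + 3)\<^sup>2) \<le> ennreal (74 * ?k\<^sup>2)" by (rule ennreal_leI)
    also have "\<dots> = 74 * (ennreal (?k\<^sup>2) * indicator D w)"
      using w by (simp add: ennreal_mult)
    also have "\<dots> \<le> Gfun D x0 w" unfolding Gfun_def by simp
    finally show ?thesis .
  next
    case False
    have "Kd D x0 w = Kd D w x0" by (rule Kd_sym)
    also have "\<dots> = ereal ?k" by (rule Kd_fin, rule Kd_finite) (use D w in auto)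
    finally have "Kd D x0 w < ereal (1/2)" using False by simp
    then have "cmod (w - x0) \<le> bdist D x0" by (rule Kd_ball[OF D(1,2,4)])
    then have c: "w \<in> cball x0 (bdist D x0)" by (simp add: dist_norm norm_minus_commute)
    have "(?k + 3)\<^sup>2 \<le> (4::real)\<^sup>2" using False k0 by (intro power_mono) auto
    then have "ennreal ((?k + 3)\<^sup>2) \<le> ennreal 18" by (intro ennreal_leI) simp
    also have "\<dots> = 18 * indicator (cball x0 (bdist D x0)) w" using c by simp
    also have "\<dots> \<le> Gfun D x0 w" unfolding Gfun_def by simp
    finally show ?thesis .
  qed
qed

lemma core:
  assumes D: "open D" "D \<noteq> UNIV" "connected D" "x0 \<in> D"
    and A: "(\<integral>\<^sup>+ x. ennreal ((qhdist D x x0)\<^sup>2) * indicator D x \<partial>lborel) < \<infinity>"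
    and hc: "continuous_on {t0..t1} h" and hi: "h ` {t0..t1} \<subseteq> D" and h0: "h t0 = x0"
    and fin: "qh_length D h t0 t1 < \<infinity>"
    and qg: "\<And>x y. t0 \<le> x \<Longrightarrow> x \<le> y \<Longrightarrow> y \<le> t1 \<Longrightarrow> qh_length D h x y \<le> Kd D (h x) (h y) + 1"
    and st: "t0 \<le> s" "s \<le> t" "t \<le> t1" and J: "1 \<le> J"
    and lb: "ereal (J - 1) \<le> Kd D x0 (h s)"
  shows "curve_length h s t \<le> ereal (Cst D x0 / sqrt J)"
proof -
  let ?Q = "qh_length D h"
  have wq: "\<And>z. 0 \<le> 1 / bdist D z" by (simp add: bdist_nonneg)
  have hD: "\<And>x. t0 \<le> x \<Longrightarrow> x \<le> t1 \<Longrightarrow> h x \<in> D" using hi by auto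
  have dpos: "\<And>x. t0 \<le> x \<Longrightarrow> x \<le> t1 \<Longrightarrow> 0 < bdist D (h x)" using bdist_pos[OF D(1,2)] hD by auto
  have Qle: "?Q x y \<le> ?Q t0 t1" if "t0 \<le> x" "x \<le> y" "y \<le> t1" for x y
    unfolding qh_length_LS by (rule LS_mono_int[OF wq]) (use that in auto)
  have Qfin: "?Q x y = ereal (real_of_ereal (?Q x y))" and Qge: "0 \<le> real_of_ereal (?Q x y)"
    if "t0 \<le> x" "x \<le> y" "y \<le> t1" for x y
  proof -
    have "?Q x y < \<infinity>" using Qle[OF that] fin by auto
    moreover have "0 \<le> ?Q x y" using qh_nonneg that by auto
    ultimately show "?Q x y = ereal (real_of_ereal (?Q x y))" "0 \<le> real_of_ereal (?Q x y)"
      by (cases "?Q x y"; auto)+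
  qed
  have Kle: "Kd D (h x) (h y) \<le> ?Q x y" if "t0 \<le> x" "x \<le> y" "y \<le> t1" for x y
  proof (rule Kd_sub[OF D(1,2) that(2)])
    show "continuous_on {x..y} h" by (rule continuous_on_subset[OF hc]) (use that in auto)
    show "h ` {x..y} \<subseteq> D" using hi that by auto
    show "?Q x y < \<infinity>" using Qle[OF that] fin by auto
  qed
  have "continuous_on {s..t} (\<lambda>x. bdist D (h x))"
    unfolding bdist_def by (intro continuous_on_infdist continuous_on_subset[OF hc]) (use st in auto)
  from continuous_attains_inf[OF compact_Icc _ this]
  obtain xmin where xmin: "xmin \<in> {s..t}" "\<And>y. y \<in> {s..t} \<Longrightarrow> bdist D (h xmin) \<le> bdist D (h y)"
    using st by auto
  define m where "m = bdist D (h xmin)"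
  have m0: "0 < m" unfolding m_def using dpos xmin st by auto
  have mle: "m \<le> bdist D (h y)" if "s \<le> y" "y \<le> t" for y using xmin(2)[of y] that unfolding m_def by auto
  have "uniformly_continuous_on {s..t} h"
    by (rule compact_uniformly_continuous[OF continuous_on_subset[OF hc]]) (use st in auto)
  then obtain eta where eta: "eta > 0"
    "\<And>x x'. x \<in> {s..t} \<Longrightarrow> x' \<in> {s..t} \<Longrightarrow> dist x' x < eta \<Longrightarrow> dist (h x') (h x) < m / 4"
    unfolding uniformly_continuous_on_def using m0 by (metis divide_pos_pos zero_less_numeral)
  obtain N :: nat where N: "N \<ge> 1" "(t - s) / N < eta"
  proof -
    define N where "N = nat \<lceil>(t - s) / eta\<rceil> + 1"
    have "(t - s) / eta < N" unfolding N_def by linarith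
    then have "t - s < eta * N" using eta(1) by (simp add: field_simps)
    moreover have "N \<ge> 1" unfolding N_def by simp
    ultimately have "(t - s) / N < eta" using eta(1) by (simp add: field_simps)
    then show ?thesis using that \<open>N \<ge> 1\<close> by blast
  qed
  define p where "p = (\<lambda>i::nat. s + real i * (t - s) / real N)"
  have Npos: "0 < real N" using N by simp
  have p0: "p 0 = s" unfolding p_def by simp
  have pN: "p N = t" unfolding p_def using Npos by simp
  have pmono: "p i \<le> p (Suc i)" for i unfolding p_def using st Npos by (simp add: field_simps)
  have pstep: "p (Suc i) - p i = (t - s) / N" for i
  proof -
    have "p (Suc i) - p i = (real (Suc i) * (t - s) - real i * (t - s)) / N"
      unfolding p_def by (simp add: diff_divide_distrib)
    also have "real (Suc i) * (t - s) - real i * (t - s) = t - s" by (simp add: algebra_simps)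
    finally show ?thesis .
  qed
  have prange: "s \<le> p i \<and> p i \<le> t" if "i \<le> N" for i
  proof -
    have "real i * (t - s) \<le> real N * (t - s)" using that st by (intro mult_right_mono) auto
    then have "real i * (t - s) / N \<le> t - s" using Npos by (simp add: field_simps)
    moreover have "0 \<le> real i * (t - s) / N" using st by simp
    ultimately show ?thesis unfolding p_def by simp
  qed
  define dl where "dl i = bdist D (h (p i))" for i
  define L where "L i = real_of_ereal (?Q (p i) (p (Suc i)))" for i
  define U where "U i = real_of_ereal (?Q t0 (p i))" for i
  have pr: "t0 \<le> p i" "p i \<le> p (Suc i)" "p (Suc i) \<le> t1" if "i < N" for i
    using prange[of i] prange[of "Suc i"] that pmono[of i] st by auto
  have pr': "t0 \<le> p i" "p i \<le> t1" if "i \<le> N" for i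
    using prange[of i] that st by auto
  have dlpos: "0 < dl i" if "i \<le> N" for i unfolding dl_def using dpos pr'[OF that] by auto
  have dlm: "m \<le> dl i" if "i \<le> N" for i unfolding dl_def using mle prange[OF that] by auto
  have close: "cmod (h x - h (p i)) \<le> dl i / 4" if "i < N" "p i \<le> x" "x \<le> p (Suc i)" for i x
  proof -
    have "dist x (p i) < eta" using that pstep[of i] N(2) by (simp add: dist_real_def)
    moreover have "x \<in> {s..t}" "p i \<in> {s..t}" using prange[of i] prange[of "Suc i"] that by auto
    ultimately have "dist (h x) (h (p i)) < m / 4" using eta(2) by blast
    then show ?thesis using dlm[of i] that by (simp add: dist_norm)
  qed
  have LQ: "?Q (p i) (p (Suc i)) = ereal (L i)" and L0: "0 \<le> L i" if "i < N" for i
    using Qfin[OF pr[OF that]] Qge[OF pr[OF that]] unfolding L_def by auto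
  have L32: "L i \<le> 3/2" if i: "i < N" for i
  proof -
    have c: "cmod (h (p (Suc i)) - h (p i)) \<le> dl i / 4" using close[OF i] pr[OF i] by auto
    have "ereal (L i) \<le> Kd D (h (p i)) (h (p (Suc i))) + 1"
      using qg[OF pr[OF i]] LQ[OF i] by simp
    also have "Kd D (h (p i)) (h (p (Suc i))) \<le> ereal (2 / dl i * cmod (h (p (Suc i)) - h (p i)))"
      unfolding dl_def by (rule Kd_seg) (use D hD pr[OF i] c dlpos[of i] i in \<open>auto simp: dl_def\<close>)
    also have "2 / dl i * cmod (h (p (Suc i)) - h (p i)) \<le> 1/2"
      using c dlpos[of i] i by (simp add: field_simps)
    finally have "ereal (L i) \<le> ereal (1/2) + 1" by (simp add: add_right_mono)
    then show ?thesis by (simp add: one_ereal_def)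
  qed
  have UQ: "?Q t0 (p i) = ereal (U i)" and U0: "0 \<le> U i" if "i \<le> N" for i
    using Qfin[of t0 "p i"] Qge[of t0 "p i"] pr'[OF that] st unfolding U_def by auto
  have Ustep: "U i + L i \<le> U (Suc i)" if i: "i < N" for i
  proof -
    have "?Q t0 (p i) + ?Q (p i) (p (Suc i)) \<le> ?Q t0 (p (Suc i))"
      unfolding qh_length_LS by (rule LS_super[OF wq]) (use pr[OF i] in auto)
    then show ?thesis using UQ[of i] UQ[of "Suc i"] LQ[OF i] i by simp
  qed
  have UJ: "J \<le> U 0 + 1"
  proof -
    have "ereal (J - 1) \<le> Kd D (h t0) (h s)" using lb h0 by simp
    also have "\<dots> \<le> ?Q t0 s" by (rule Kle) (use st in auto)
    also have "\<dots> = ereal (U 0)" using UQ[of 0] p0 by simp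
    finally show ?thesis by simp
  qed
  have cl_piece: "curve_length h (p i) (p (Suc i)) \<le> ereal (5/4 * dl i * L i)" if i: "i < N" for i
  proof -
    have "curve_length h (p i) (p (Suc i)) \<le> ereal (5/4 * dl i) * ?Q (p i) (p (Suc i))"
      unfolding curve_length_LS qh_length_LS
    proof (rule LS_cmp)
      fix x assume x: "p i \<le> x" "x \<le> p (Suc i)"
      have xb: "t0 \<le> x" "x \<le> t1" using x pr[OF i] by auto
      have "bdist D (h x) \<le> bdist D (h (p i)) + cmod (h x - h (p i))" by (rule bdist_lip')
      then have "bdist D (h x) \<le> 5/4 * dl i" using close[OF i x] unfolding dl_def by simp
      then show "1 \<le> 5/4 * dl i * (1 / bdist D (h x))" using dpos[OF xb] by (simp add: field_simps)
    qed (use wq dlpos[of i] i in auto)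
    then show ?thesis using LQ[OF i] by simp
  qed
  have cl_total: "curve_length h s t \<le> ereal (\<Sum>i<N. 5/4 * dl i * L i)"
  proof -
    have "curve_length h s t = LS (\<lambda>z. 1) h (p 0) (p N)" using p0 pN by (simp add: curve_length_LS)
    also have "\<dots> \<le> (\<Sum>k<N. LS (\<lambda>z. 1) h (p k) (p (Suc k)))"
      by (rule LS_chain_sub) (auto simp: pmono)
    also have "\<dots> \<le> (\<Sum>k<N. ereal (5/4 * dl k * L k))"
      by (intro sum_mono) (use cl_piece in \<open>auto simp: curve_length_LS\<close>)
    finally show ?thesis by simp
  qed
  have S2: "(\<Sum>i<N. L i / (U i + 1)\<^sup>2) \<le> 3 / J"
  proof -
    have "(\<Sum>i<N. L i / (U i + 1)\<^sup>2) \<le> (\<Sum>i<N. 3 * (1 / (U i + 1) - 1 / (U (Suc i) + 1)))"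
    proof (rule sum_mono)
      fix i assume "i \<in> {..<N}"
      then have i: "i < N" by simp
      show "L i / (U i + 1)\<^sup>2 \<le> 3 * (1 / (U i + 1) - 1 / (U (Suc i) + 1))"
        by (rule tele_step) (use U0[of i] L0[OF i] L32[OF i] Ustep[OF i] i in auto)
    qed
    also have "\<dots> = (\<Sum>i<N. 3 / (U i + 1) - 3 / (U (Suc i) + 1))"
      by (simp add: right_diff_distrib)
    also have "\<dots> = 3 / (U 0 + 1) - 3 / (U N + 1)"
      by (rule sum_lessThan_telescope')
    also have "\<dots> \<le> 3 / (U 0 + 1)" using U0[of N] by simp
    also have "\<dots> \<le> 3 / J" using UJ J U0[of 0] by (intro divide_left_mono) auto
    finally show ?thesis .
  qed
  define M where "M = enn2real (\<integral>\<^sup>+ w. Gfun D x0 w \<partial>lborel)"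
  have S1: "(\<Sum>i<N. L i * (U i + 1)\<^sup>2 * (dl i)\<^sup>2) \<le> 80 * M"
  proof -
    define B where "B i = ball (h (p i)) (dl i / 2)" for i
    define c where "c i = L i * (U i + 1)\<^sup>2 / 5" for i
    have c0: "0 \<le> c i" if "i < N" for i using L0[OF that] unfolding c_def by simp
    have pmono2: "p i \<le> p j" if "i \<le> j" for i j
    proof -
      have "real i * (t - s) \<le> real j * (t - s)" using that st by (intro mult_right_mono) auto
      then show ?thesis unfolding p_def using Npos by (simp add: divide_right_mono)
    qed
    have BD: "B i \<subseteq> D" if i: "i \<le> N" for i
    proof
      fix w assume "w \<in> B i"
      then have "dist (h (p i)) w < bdist D (h (p i))" using dlpos[OF i] unfolding B_def dl_def by auto
      then show "w \<in> D" by (rule bdist_ball)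
    qed
    have inB: "Kd D (h (p i)) w \<le> 1" "Kd D w (h (p i)) \<le> 1" if i: "i \<le> N" and w: "w \<in> B i" for i w
    proof -
      have c: "cmod (w - h (p i)) \<le> dl i / 2" using w unfolding B_def by (simp add: dist_norm norm_minus_commute)
      have "Kd D (h (p i)) w \<le> ereal (2 / dl i * cmod (w - h (p i)))"
        unfolding dl_def by (rule Kd_seg) (use D hD pr'[OF i] c in \<open>auto simp: dl_def\<close>)
      moreover have "2 / dl i * cmod (w - h (p i)) \<le> 1" using c dlpos[OF i] by (simp add: field_simps)
      ultimately show "Kd D (h (p i)) w \<le> 1" by (metis ereal_less_eq(3) one_ereal_def order_trans)
      then show "Kd D w (h (p i)) \<le> 1" using Kd_sym by metis
    qed
    have kD: "Kd D x0 w = ereal (qhdist D w x0)" if "w \<in> D" for w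
    proof -
      have "Kd D x0 w = Kd D w x0" by (rule Kd_sym)
      also have "\<dots> = ereal (qhdist D w x0)" by (rule Kd_fin, rule Kd_finite) (use D that in auto)
      finally show ?thesis .
    qed
    have Ub: "U i + 1 \<le> qhdist D w x0 + 3" if i: "i < N" and w: "w \<in> B i" for i w
    proof -
      have wD: "w \<in> D" using BD[of i] i w by auto
      have a1: "ereal (U i) \<le> Kd D x0 (h (p i)) + 1"
        using qg[of t0 "p i"] pr[OF i] UQ[of i] i st h0 by auto
      have a2: "Kd D x0 (h (p i)) \<le> Kd D x0 w + Kd D w (h (p i))" by (rule Kd_tri)
      have a3: "Kd D x0 w + Kd D w (h (p i)) \<le> ereal (qhdist D w x0) + 1"
        using kD[OF wD] inB(2)[of i w] i w by (intro add_mono) auto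
      have "ereal (U i) \<le> (ereal (qhdist D w x0) + 1) + 1"
        using a1 a2 a3 by (meson add_right_mono order_trans)
      then show ?thesis by (simp add: one_ereal_def)
    qed
    have ov: "(\<Sum>i<N. L i * indicator (B i) w) \<le> 5" for w
    proof (cases "\<exists>i<N. w \<in> B i")
      case False
      then have "(\<Sum>i<N. L i * indicator (B i) w) = 0" by (intro sum.neutral) auto
      then show ?thesis by simp
    next
      case True
      define S where "S = {i. i < N \<and> w \<in> B i}"
      have Sf: "finite S" "S \<noteq> {}" using True unfolding S_def by auto
      define i1 where "i1 = Min S"
      define i2 where "i2 = Max S"
      have i1S: "i1 \<in> S" and i2S: "i2 \<in> S" using Sf unfolding i1_def i2_def by auto
      have inS: "i1 \<le> i \<and> i \<le> i2" if "i \<in> S" for i using Sf that unfolding i1_def i2_def by auto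
      have i12: "i1 \<le> i2" using inS[OF i1S] by auto
      have i2N: "i2 < N" using i2S unfolding S_def by auto
      have wB1: "w \<in> B i1" and wB2: "w \<in> B i2" using i1S i2S unfolding S_def by auto
      have "(\<Sum>i<N. L i * indicator (B i) w) \<le> (\<Sum>i<N. if i \<in> {i1..i2} then L i else 0)"
      proof (rule sum_mono)
        fix i assume "i \<in> {..<N}"
        then have i: "i < N" by simp
        show "L i * indicator (B i) w \<le> (if i \<in> {i1..i2} then L i else 0)"
          using L0[OF i] inS[of i] i unfolding S_def by (auto simp: indicator_def)
      qed
      also have "\<dots> = sum L ({..<N} \<inter> {i1..i2})" by (rule sum.inter_restrict[symmetric]) simp
      also have "{..<N} \<inter> {i1..i2} = {i1..<Suc i2}" using i2N by auto
      also have "sum L {i1..<Suc i2} = sum L {i1..<i2} + L i2" using i12 by simp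
      also have "sum L {i1..<i2} \<le> 3"
      proof -
        have "ereal (sum L {i1..<i2}) = (\<Sum>i\<in>{i1..<i2}. ?Q (p i) (p (Suc i)))"
          using LQ i2N by (auto intro!: sum.cong)
        also have "\<dots> \<le> ?Q (p i1) (p i2)"
          unfolding qh_length_LS by (rule LS_chain_super[OF wq]) (use pmono i12 in auto)
        also have "\<dots> \<le> Kd D (h (p i1)) (h (p i2)) + 1"
          by (rule qg) (use pr'[of i1] pr'[of i2] pmono2[OF i12] i12 i2N in auto)
        also have "Kd D (h (p i1)) (h (p i2)) \<le> Kd D (h (p i1)) w + Kd D w (h (p i2))" by (rule Kd_tri)
        also have "\<dots> \<le> 1 + 1" using inB(1)[of i1 w] inB(2)[of i2 w] wB1 wB2 i12 i2N
          by (intro add_mono) auto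
        finally have "ereal (sum L {i1..<i2}) \<le> 1 + 1 + 1" by (simp add: add_right_mono)
        then show ?thesis by (simp add: one_ereal_def)
      qed
      finally show ?thesis using L32[OF i2N] by linarith
    qed
    have pt: "(\<Sum>i<N. ennreal (c i) * indicator (B i) w) \<le> Gfun D x0 w" for w
    proof (cases "w \<in> D")
      case False
      have "(\<Sum>i<N. ennreal (c i) * indicator (B i) w) = 0"
      proof (intro sum.neutral ballI)
        fix i assume "i \<in> {..<N}"
        then have "w \<notin> B i" using BD[of i] False by auto
        then show "ennreal (c i) * indicator (B i) w = 0" by simp
      qed
      then show ?thesis by simp
    next
      case True
      let ?k = "qhdist D w x0"
      have e1: "ennreal (c i) * indicator (B i) w = ennreal (c i * indicator (B i) w)" for i
        by (cases "w \<in> B i") auto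
      have "(\<Sum>i<N. ennreal (c i) * indicator (B i) w) = (\<Sum>i<N. ennreal (c i * indicator (B i) w))"
        by (simp only: e1)
      also have "\<dots> = ennreal (\<Sum>i<N. c i * indicator (B i) w)"
        by (rule sum_ennreal) (use c0 in auto)
      finally have e: "(\<Sum>i<N. ennreal (c i) * indicator (B i) w) = ennreal (\<Sum>i<N. c i * indicator (B i) w)" .
      have "(\<Sum>i<N. c i * indicator (B i) w) \<le> (\<Sum>i<N. (?k + 3)\<^sup>2 / 5 * (L i * indicator (B i) w))"
      proof (rule sum_mono)
        fix i assume "i \<in> {..<N}"
        then have i: "i < N" by simp
        show "c i * indicator (B i) w \<le> (?k + 3)\<^sup>2 / 5 * (L i * indicator (B i) w)"
        proof (cases "w \<in> B i")
          case True
          have "(U i + 1)\<^sup>2 \<le> (?k + 3)\<^sup>2" using Ub[OF i True] U0[of i] i by (intro power_mono) auto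
          then have "L i * (U i + 1)\<^sup>2 \<le> L i * (?k + 3)\<^sup>2" using L0[OF i] by (rule mult_left_mono)
          then show ?thesis using True unfolding c_def by (simp add: field_simps)
        qed simp
      qed
      also have "\<dots> = (?k + 3)\<^sup>2 / 5 * (\<Sum>i<N. L i * indicator (B i) w)" by (rule sum_distrib_left[symmetric])
      also have "\<dots> \<le> (?k + 3)\<^sup>2 / 5 * 5" using ov[of w] by (intro mult_left_mono) auto
      finally have "(\<Sum>i<N. c i * indicator (B i) w) \<le> (?k + 3)\<^sup>2" by simp
      then have "(\<Sum>i<N. ennreal (c i) * indicator (B i) w) \<le> ennreal ((?k + 3)\<^sup>2)"
        unfolding e by (rule ennreal_leI)
      also have "\<dots> \<le> Gfun D x0 w" by (rule G_point[OF D True])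
      finally show ?thesis .
    qed
    have Bs: "B i \<in> sets lborel" for i unfolding B_def by simp
    have meas: "(\<lambda>w. ennreal (c i) * indicator (B i) w) \<in> borel_measurable lborel" for i
      by (rule borel_measurable_times_ennreal[OF borel_measurable_const borel_measurable_indicator]) (rule Bs)
    have "(\<integral>\<^sup>+w. (\<Sum>i<N. ennreal (c i) * indicator (B i) w) \<partial>lborel) =
          (\<Sum>i<N. \<integral>\<^sup>+w. ennreal (c i) * indicator (B i) w \<partial>lborel)"
      by (rule nn_integral_sum) (rule meas)
    also have "\<dots> = (\<Sum>i<N. ennreal (c i) * emeasure lborel (B i))"
      by (intro sum.cong refl nn_integral_cmult_indicator Bs)
    finally have "(\<Sum>i<N. ennreal (c i) * emeasure lborel (B i)) = (\<integral>\<^sup>+w. (\<Sum>i<N. ennreal (c i) * indicator (B i) w) \<partial>lborel)" by simp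
    also have "\<dots> \<le> (\<integral>\<^sup>+w. Gfun D x0 w \<partial>lborel)" by (intro nn_integral_mono pt)
    finally have I: "(\<Sum>i<N. ennreal (c i) * emeasure lborel (B i)) \<le> (\<integral>\<^sup>+w. Gfun D x0 w \<partial>lborel)" .
    have "(\<Sum>i<N. ennreal (c i * (dl i)\<^sup>2 / 16)) \<le> (\<Sum>i<N. ennreal (c i) * emeasure lborel (B i))"
    proof (rule sum_mono)
      fix i assume "i \<in> {..<N}"
      then have i: "i < N" by simp
      have eq: "c i * (dl i)\<^sup>2 / 16 = c i * ((dl i / 2)\<^sup>2 / 4)" by (simp add: power2_eq_square)
      have e2: "ennreal (c i * ((dl i / 2)\<^sup>2 / 4)) = ennreal (c i) * ennreal ((dl i / 2)\<^sup>2 / 4)"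
        by (rule ennreal_mult) (use c0[OF i] in auto)
      have "ennreal ((dl i / 2)\<^sup>2 / 4) \<le> emeasure lborel (B i)"
        unfolding B_def by (rule ball_measure) (use dlpos[of i] i in auto)
      then have "ennreal (c i) * ennreal ((dl i / 2)\<^sup>2 / 4) \<le> ennreal (c i) * emeasure lborel (B i)"
        by (rule mult_left_mono) simp
      then show "ennreal (c i * (dl i)\<^sup>2 / 16) \<le> ennreal (c i) * emeasure lborel (B i)"
        unfolding eq e2 .
    qed
    also note I
    finally have "ennreal (\<Sum>i<N. c i * (dl i)\<^sup>2 / 16) \<le> (\<integral>\<^sup>+w. Gfun D x0 w \<partial>lborel)"
      using c0 by (subst sum_ennreal[symmetric]) auto
    then have "enn2real (ennreal (\<Sum>i<N. c i * (dl i)\<^sup>2 / 16)) \<le> M"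
      unfolding M_def using IG_fin[OF D A] by (intro enn2real_mono) auto
    moreover have "0 \<le> (\<Sum>i<N. c i * (dl i)\<^sup>2 / 16)" using c0 by (intro sum_nonneg) auto
    ultimately have "(\<Sum>i<N. c i * (dl i)\<^sup>2 / 16) \<le> M" by simp
    moreover have "(\<Sum>i<N. L i * (U i + 1)\<^sup>2 * (dl i)\<^sup>2) = 80 * (\<Sum>i<N. c i * (dl i)\<^sup>2 / 16)"
      unfolding c_def by (simp add: sum_distrib_left)
    ultimately show ?thesis by linarith
  qed
  define lam where "lam = 1 / sqrt J"
  have lam: "0 < lam" unfolding lam_def using J by simp
  have "(\<Sum>i<N. 5/4 * dl i * L i) \<le> (\<Sum>i<N. 2 * dl i * L i)"
    by (intro sum_mono) (use dlpos L0 in \<open>auto intro!: mult_right_mono simp: less_imp_le\<close>)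
  also have "\<dots> \<le> (\<Sum>i<N. lam * (L i * (U i + 1)\<^sup>2 * (dl i)\<^sup>2) + (1 / lam) * (L i / (U i + 1)\<^sup>2))"
  proof (rule sum_mono)
    fix i assume "i \<in> {..<N}"
    then have i: "i < N" by simp
    show "2 * dl i * L i \<le> lam * (L i * (U i + 1)\<^sup>2 * (dl i)\<^sup>2) + (1 / lam) * (L i / (U i + 1)\<^sup>2)"
      using amgm[OF lam _ L0[OF i], of "(U i + 1)\<^sup>2" "dl i"] U0[of i] i by auto
  qed
  also have "\<dots> = lam * (\<Sum>i<N. L i * (U i + 1)\<^sup>2 * (dl i)\<^sup>2) + (1 / lam) * (\<Sum>i<N. L i / (U i + 1)\<^sup>2)"
    by (simp add: sum.distrib sum_distrib_left)
  also have "\<dots> \<le> lam * (80 * M) + (1 / lam) * (3 / J)"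
    using S1 S2 lam by (intro add_mono mult_left_mono) auto
  also have "\<dots> = Cst D x0 / sqrt J"
  proof -
    have sJ: "0 < sqrt J" using J by simp
    have "(1 / lam) * (3 / J) = 3 / sqrt J"
      unfolding lam_def using sJ J by (simp add: field_simps)
    moreover have "lam * (80 * M) = 80 * M / sqrt J" unfolding lam_def by simp
    ultimately show ?thesis unfolding Cst_def M_def[symmetric] by (simp add: add_divide_distrib)
  qed
  finally show ?thesis using cl_total by (meson ereal_less_eq(3) order_trans)
qed

lemma jidx_le:
  assumes Q: "Q \<in> W" and qs: "qhdist_set D x0 Q \<le> real n" and n: "1 \<le> n"
  shows "jidx D W x0 Q \<le> n"
proof -
  let ?qs = "qhdist_set D x0 Q"
  have lay: "Q \<in> Dlayer D W x0 j \<longleftrightarrow> 1 \<le> j \<and> ?qs \<le> real j" for j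
    using Q unfolding Dlayer_def by auto
  define m where "m = (LEAST j::nat. 1 \<le> j \<and> ?qs \<le> real j)"
  have ex: "1 \<le> n \<and> ?qs \<le> real n" using qs n by auto
  have mP: "1 \<le> m \<and> ?qs \<le> real m" unfolding m_def by (rule LeastI[of _ n]) (rule ex)
  have mn: "m \<le> n" unfolding m_def by (rule Least_le) (rule ex)
  have mmin: "\<not> (1 \<le> j \<and> ?qs \<le> real j)" if "j < m" for j
    using not_less_Least[of j "\<lambda>j. 1 \<le> j \<and> ?qs \<le> real j"] that unfolding m_def by auto
  have m1: "m - 1 < m" using mP by simp
  have "Q \<in> Dlayer D W x0 m" using mP lay[of m] by blast
  moreover have "Q \<notin> Dlayer D W x0 (m - 1)" using mmin[OF m1] lay[of "m - 1"] by blast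
  ultimately have Pm: "m \<ge> 1 \<and> Q \<in> Dlayer D W x0 m - Dlayer D W x0 (m - 1)" using mP by blast
  have uniq: "j = m" if "j \<ge> 1 \<and> Q \<in> Dlayer D W x0 j - Dlayer D W x0 (j - 1)" for j
  proof (rule ccontr)
    assume "j \<noteq> m"
    then consider "j < m" | "j > m" by linarith
    then show False
    proof cases
      case 1
      have "Q \<in> Dlayer D W x0 j" using that by blast
      then have "1 \<le> j \<and> ?qs \<le> real j" using lay[of j] by blast
      then show ?thesis using mmin[OF 1] by blast
    next
      case 2
      then have a: "1 \<le> j - 1" "real m \<le> real (j - 1)" using mP by auto
      then have "?qs \<le> real (j - 1)" using mP by linarith
      then have "Q \<in> Dlayer D W x0 (j - 1)" using lay[of "j - 1"] a(1) by blast
      then show ?thesis using that by blast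
    qed
  qed
  have "jidx D W x0 Q = m" unfolding jidx_def by (rule the_equality) (use Pm uniq in blast)+
  then show ?thesis using mn by simp
qed

lemma bounded_part:
  assumes D: "open D" "D \<noteq> UNIV" "connected D" "x0 \<in> D"
    and A: "(\<integral>\<^sup>+ x. ennreal ((qhdist D x x0)\<^sup>2) * indicator D x \<partial>lborel) < \<infinity>"
    and z: "z \<in> D"
  shows "cmod (z - x0) \<le> Cst D x0"
proof -
  have wq: "\<And>z. 0 \<le> 1 / bdist D z" by (simp add: bdist_nonneg)
  have Kz: "Kd D x0 z < \<infinity>" by (rule Kd_finite) (use D z in auto)
  then obtain kz where kz: "Kd D x0 z = ereal kz" using Kd_nonneg[of D x0 z] by (cases "Kd D x0 z") auto
  have "Kd D x0 z < ereal (kz + 1)" using kz by simp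
  then obtain g where g: "g \<in> adm D x0 z" "qh_length D g 0 1 < ereal (kz + 1)"
    unfolding Kd_def by (auto simp: INF_less_iff)
  have gc: "continuous_on {0..1} g" and gi: "g ` {0..1} \<subseteq> D" and g0: "g 0 = x0" and g1: "g 1 = z"
    using g(1) unfolding adm_def path_def path_image_def pathstart_def pathfinish_def by auto
  let ?Q = "qh_length D g"
  have fin: "?Q 0 1 < \<infinity>" using g(2) less_trans[of "?Q 0 1" "ereal (kz + 1)" \<infinity>] by simp
  have Qle: "?Q x y \<le> ?Q 0 1" if "0 \<le> x" "x \<le> y" "y \<le> 1" for x y
    unfolding qh_length_LS by (rule LS_mono_int[OF wq]) (use that in auto)
  have Qr: "?Q x y = ereal (real_of_ereal (?Q x y))" if "0 \<le> x" "x \<le> y" "y \<le> 1" for x y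
  proof -
    have "?Q x y < \<infinity>" using Qle[OF that] fin by auto
    moreover have "0 \<le> ?Q x y" using qh_nonneg that by auto
    ultimately show ?thesis by (cases "?Q x y") auto
  qed
  have Kle: "Kd D (g x) (g y) \<le> ?Q x y" if "0 \<le> x" "x \<le> y" "y \<le> 1" for x y
  proof (rule Kd_sub[OF D(1,2) that(2)])
    show "continuous_on {x..y} g" by (rule continuous_on_subset[OF gc]) (use that in auto)
    show "g ` {x..y} \<subseteq> D" using gi that by auto
    show "?Q x y < \<infinity>" using Qle[OF that] fin by auto
  qed
  have qg: "?Q x y \<le> Kd D (g x) (g y) + 1" if xy: "0 \<le> x" "x \<le> y" "y \<le> 1" for x y
  proof -
    define r1 where "r1 = real_of_ereal (?Q 0 x)"
    define r2 where "r2 = real_of_ereal (?Q x y)"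
    define r3 where "r3 = real_of_ereal (?Q y 1)"
    define T where "T = real_of_ereal (?Q 0 1)"
    have e1: "?Q 0 x = ereal r1" unfolding r1_def by (rule Qr) (use xy in auto)
    have e2: "?Q x y = ereal r2" unfolding r2_def by (rule Qr) (use xy in auto)
    have e3: "?Q y 1 = ereal r3" unfolding r3_def by (rule Qr) (use xy in auto)
    have eT: "?Q 0 1 = ereal T" unfolding T_def by (rule Qr) auto
    have s1: "?Q 0 x + ?Q x y \<le> ?Q 0 y" unfolding qh_length_LS by (rule LS_super[OF wq]) (use xy in auto)
    have s2: "?Q 0 y + ?Q y 1 \<le> ?Q 0 1" unfolding qh_length_LS by (rule LS_super[OF wq]) (use xy in auto)
    have eY: "?Q 0 y = ereal (real_of_ereal (?Q 0 y))" by (rule Qr) (use xy in auto)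
    define rY where "rY = real_of_ereal (?Q 0 y)"
    have eY': "?Q 0 y = ereal rY" using eY unfolding rY_def .
    have "r1 + r2 \<le> rY" using s1 unfolding e1 e2 eY' by simp
    moreover have "rY + r3 \<le> T" using s2 unfolding e3 eT eY' by simp
    ultimately have sum: "r1 + r2 + r3 \<le> T" by linarith
    have TK: "T < kz + 1" using g(2) eT by simp
    have K1: "Kd D x0 (g x) \<le> ereal r1" using Kle[of 0 x] xy e1 g0 by auto
    have K3: "Kd D (g y) z \<le> ereal r3" using Kle[of y 1] xy e3 g1 by auto
    have K2: "Kd D (g x) (g y) \<le> ereal r2" using Kle[OF xy] e2 by simp
    then obtain kk where kk: "Kd D (g x) (g y) = ereal kk" using Kd_nonneg[of D "g x" "g y"]
      by (cases "Kd D (g x) (g y)") auto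
    have "Kd D x0 z \<le> Kd D x0 (g x) + Kd D (g x) z" by (rule Kd_tri)
    also have "Kd D (g x) z \<le> Kd D (g x) (g y) + Kd D (g y) z" by (rule Kd_tri)
    finally have "Kd D x0 z \<le> Kd D x0 (g x) + (Kd D (g x) (g y) + Kd D (g y) z)" by (simp add: add_left_mono)
    also have "\<dots> \<le> ereal r1 + (ereal kk + ereal r3)" using K1 K3 kk by (intro add_mono) auto
    finally have "kz \<le> r1 + kk + r3" using kz by simp
    then have "r2 \<le> kk + 1" using sum TK by linarith
    then show ?thesis using e2 kk by (simp add: one_ereal_def)
  qed
  have "curve_length g 0 1 \<le> ereal (Cst D x0 / sqrt 1)"
    by (rule core[OF D A gc gi g0 fin qg]) (use Kd_nonneg in \<open>auto simp: zero_ereal_def[symmetric]\<close>)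
  moreover have "ereal (cmod (g 1 - g 0)) \<le> curve_length g 0 1"
    using LS_chord[of "\<lambda>z. 1" 0 1 g] by (simp add: curve_length_LS)
  ultimately have "ereal (cmod (g 1 - g 0)) \<le> ereal (Cst D x0 / sqrt 1)" by (meson order_trans)
  then show ?thesis using g0 g1 by simp
qed

lemma ereal_le_plus1: "0 \<le> (x::ereal) \<Longrightarrow> x \<le> x + 1"
  using add_left_mono[of 0 1 x] by simp

lemma geo_right:
  assumes D: "open D" "D \<noteq> UNIV" "connected D" "x0 \<in> D"
    and A: "(\<integral>\<^sup>+ x. ennreal ((qhdist D x x0)\<^sup>2) * indicator D x \<partial>lborel) < \<infinity>"
    and geo: "qh_geodesic D g I" and intv: "is_interval I" and t0: "t0 \<in> I" "g t0 = x0"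
    and st: "t0 \<le> s" "s \<le> t" "t \<in> I" and J: "1 \<le> J"
    and lb: "ereal (J - 1) \<le> Kd D x0 (g s)"
  shows "curve_length g s t \<le> ereal (Cst D x0 / sqrt J)"
proof -
  have iv: "\<And>a b x. a \<in> I \<Longrightarrow> b \<in> I \<Longrightarrow> a \<le> x \<Longrightarrow> x \<le> b \<Longrightarrow> x \<in> I"
    using intv unfolding is_interval_1 by blast
  have sub: "{t0..t} \<subseteq> I"
  proof
    fix x assume "x \<in> {t0..t}"
    then show "x \<in> I" using iv[OF t0(1) st(3)] by auto
  qed
  have gc: "continuous_on I g" and gi: "g ` I \<subseteq> D"
    and gq: "\<And>x y. x \<in> I \<Longrightarrow> y \<in> I \<Longrightarrow> x \<le> y \<Longrightarrow> qh_length D g x y = ereal (qhdist D (g x) (g y))"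
    using geo unfolding qh_geodesic_def by auto
  have hc: "continuous_on {t0..t} g" by (rule continuous_on_subset[OF gc sub])
  have hi: "g ` {t0..t} \<subseteq> D" using gi sub by blast
  have fin: "qh_length D g t0 t < \<infinity>" using gq[OF t0(1) st(3)] st by simp
  have qg: "qh_length D g x y \<le> Kd D (g x) (g y) + 1" if xy: "t0 \<le> x" "x \<le> y" "y \<le> t" for x y
  proof -
    have "x \<in> I" "y \<in> I" using sub xy by auto
    then have "qh_length D g x y = ereal (qhdist D (g x) (g y))" using gq xy by blast
    also have "\<dots> \<le> Kd D (g x) (g y)" by (rule qhdist_le_Kd)
    also have "\<dots> \<le> Kd D (g x) (g y) + 1" by (rule ereal_le_plus1[OF Kd_nonneg])
    finally show ?thesis .
  qed
  show ?thesis by (rule core[OF D A hc hi t0(2) fin qg st(1,2) order_refl J lb])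
qed

lemma geo_left:
  assumes D: "open D" "D \<noteq> UNIV" "connected D" "x0 \<in> D"
    and A: "(\<integral>\<^sup>+ x. ennreal ((qhdist D x x0)\<^sup>2) * indicator D x \<partial>lborel) < \<infinity>"
    and geo: "qh_geodesic D g I" and intv: "is_interval I" and t0: "t0 \<in> I" "g t0 = x0"
    and st: "s \<in> I" "s \<le> t" "t \<le> t0" and J: "1 \<le> J"
    and lb: "ereal (J - 1) \<le> Kd D x0 (g t)"
  shows "curve_length g s t \<le> ereal (Cst D x0 / sqrt J)"
proof -
  have iv: "\<And>a b x. a \<in> I \<Longrightarrow> b \<in> I \<Longrightarrow> a \<le> x \<Longrightarrow> x \<le> b \<Longrightarrow> x \<in> I"
    using intv unfolding is_interval_1 by blast
  have sub: "{s..t0} \<subseteq> I"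
  proof
    fix x assume "x \<in> {s..t0}"
    then show "x \<in> I" using iv[OF st(1) t0(1)] by auto
  qed
  have gc: "continuous_on I g" and gi: "g ` I \<subseteq> D"
    and gq: "\<And>x y. x \<in> I \<Longrightarrow> y \<in> I \<Longrightarrow> x \<le> y \<Longrightarrow> qh_length D g x y = ereal (qhdist D (g x) (g y))"
    using geo unfolding qh_geodesic_def by auto
  define h where "h = (\<lambda>x. g (2 * t0 - x))"
  have hrev: "qh_length D h x y \<le> qh_length D g (2 * t0 - y) (2 * t0 - x)" for x y
    unfolding qh_length_LS h_def by (rule LS_rev)
  have im: "(\<lambda>x. 2 * t0 - x) ` {t0..2 * t0 - s} \<subseteq> {s..t0}" by auto
  have hc: "continuous_on {t0..2 * t0 - s} h" unfolding h_def
    by (rule continuous_on_compose2[OF continuous_on_subset[OF gc sub] _ im]) (intro continuous_intros)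
  have hi: "h ` {t0..2 * t0 - s} \<subseteq> D"
  proof
    fix y assume "y \<in> h ` {t0..2 * t0 - s}"
    then obtain x where x: "x \<in> {t0..2 * t0 - s}" "y = g (2 * t0 - x)" unfolding h_def by auto
    then have "2 * t0 - x \<in> I" using sub im by auto
    then show "y \<in> D" using gi x by auto
  qed
  have h0: "h t0 = x0" unfolding h_def using t0 by simp
  have "qh_length D h t0 (2 * t0 - s) \<le> qh_length D g s t0" using hrev[of t0 "2 * t0 - s"] by simp
  also have "\<dots> < \<infinity>" using gq[OF st(1) t0(1)] st by simp
  finally have fin: "qh_length D h t0 (2 * t0 - s) < \<infinity>" .
  have qg: "qh_length D h x y \<le> Kd D (h x) (h y) + 1" if xy: "t0 \<le> x" "x \<le> y" "y \<le> 2 * t0 - s" for x y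
  proof -
    have I: "2 * t0 - y \<in> I" "2 * t0 - x \<in> I" using sub xy by auto
    have "qh_length D h x y \<le> qh_length D g (2 * t0 - y) (2 * t0 - x)" by (rule hrev)
    also have "\<dots> = ereal (qhdist D (g (2 * t0 - y)) (g (2 * t0 - x)))" using gq[OF I] xy by simp
    also have "\<dots> \<le> Kd D (g (2 * t0 - y)) (g (2 * t0 - x))" by (rule qhdist_le_Kd)
    also have "\<dots> = Kd D (h x) (h y)" unfolding h_def by (rule Kd_sym)
    also have "\<dots> \<le> Kd D (h x) (h y) + 1" by (rule ereal_le_plus1[OF Kd_nonneg])
    finally show ?thesis .
  qed
  have st': "t0 \<le> 2 * t0 - t" "2 * t0 - t \<le> 2 * t0 - s" "2 * t0 - s \<le> 2 * t0 - s" using st by auto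
  have lb': "ereal (J - 1) \<le> Kd D x0 (h (2 * t0 - t))" using lb unfolding h_def by simp
  have core_app: "curve_length h (2 * t0 - t) (2 * t0 - s) \<le> ereal (Cst D x0 / sqrt J)"
    by (rule core[OF D A hc hi h0 fin qg st' J lb'])
  have e: "g = (\<lambda>x. h (2 * t0 - x))" unfolding h_def by simp
  have "curve_length g s t \<le> curve_length h (2 * t0 - t) (2 * t0 - s)"
    unfolding curve_length_LS by (subst e) (rule LS_rev)
  then show ?thesis using core_app by (meson order_trans)
qed

theorem lemma2p6:
  fixes D :: "complex set" and x0 :: complex and W :: "complex set set"
  assumes "open D" and "connected D" and "D \<noteq> UNIV" and "x0 \<in> D"
    and "(\<integral>\<^sup>+ x \<in> D. ennreal ((qhdist D x x0)\<^sup>2) \<partial>lborel) < \<infinity>"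
    and "whitney D W"
  shows "(\<exists>C>0. \<forall>g a b I j0 J.
            a < b \<and> (I = {a..b} \<or> I = {a..<b}) \<and> qh_geodesic D g I \<and> x0 \<in> g ` I \<and>
            j0 \<ge> 1 \<and> is_interval J \<and> J \<noteq> {} \<and> J \<subseteq> I \<and>
            (\<forall>Q\<in>W. Q \<inter> g ` J \<noteq> {} \<longrightarrow> jidx D W x0 Q \<ge> j0)
            \<longrightarrow> curve_length_on g J \<le> ereal (C / sqrt (real j0)))
         \<and> bounded D"
proof -
  have D: "open D" "D \<noteq> UNIV" "connected D" "x0 \<in> D" using assms by auto
  have A: "(\<integral>\<^sup>+ x. ennreal ((qhdist D x x0)\<^sup>2) * indicator D x \<partial>lborel) < \<infinity>" using assms(5) by simp
  have WD: "\<Union>W = D" using assms(6) unfolding whitney_def by auto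
  define C where "C = 2 * Cst D x0"
  have Cpos: "C > 0" unfolding C_def using Cst_pos[of D x0] by simp
  have main: "curve_length_on g J \<le> ereal (C / sqrt (real j0))"
    if H: "a < b" "I = {a..b} \<or> I = {a..<b}" "qh_geodesic D g I" "x0 \<in> g ` I"
       "j0 \<ge> 1" "is_interval J" "J \<noteq> {}" "J \<subseteq> I"
       "\<forall>Q\<in>W. Q \<inter> g ` J \<noteq> {} \<longrightarrow> jidx D W x0 Q \<ge> j0" for g a b I j0 J
  proof -
    obtain t0 where t0: "t0 \<in> I" "g t0 = x0" using H(4) by auto
    have intv: "is_interval I"
      unfolding is_interval_1
    proof (intro ballI allI impI)
      fix u v x assume "u \<in> I" "v \<in> I" "u \<le> x \<and> x \<le> v"
      then show "x \<in> I" using H(2) by (elim disjE) auto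
    qed
    have gi: "g ` I \<subseteq> D" using H(3) unfolding qh_geodesic_def by auto
    have Jr: "real j0 \<ge> 1" using H(5) by simp
    have lbJ: "ereal (real j0 - 1) \<le> Kd D x0 (g x)" if x: "x \<in> J" for x
    proof (rule ccontr)
      assume nle: "\<not> ereal (real j0 - 1) \<le> Kd D x0 (g x)"
      then have lt: "Kd D x0 (g x) < ereal (real j0 - 1)" by simp
      then have "Kd D x0 (g x) < \<infinity>" using less_trans[OF lt, of \<infinity>] by simp
      then have "Kd D x0 (g x) = ereal (qhdist D x0 (g x))" by (rule Kd_fin)
      then have "qhdist D x0 (g x) < real j0 - 1" using lt by simp
      then have qle: "qhdist D x0 (g x) \<le> real (j0 - 1)" using H(5) by (simp add: of_nat_diff)
      have "j0 \<noteq> 1"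
      proof
        assume "j0 = 1"
        then have "ereal (real j0 - 1) = 0" by (simp add: zero_ereal_def)
        then show False using nle Kd_nonneg[of D x0 "g x"] by (simp add: zero_ereal_def)
      qed
      then have j2: "1 \<le> j0 - 1" using H(5) by auto
      have "g x \<in> D" using gi H(8) x by blast
      then obtain Q where Q: "Q \<in> W" "g x \<in> Q" using WD by blast
      have "qhdist_set D x0 Q \<le> qhdist D x0 (g x)"
        unfolding qhdist_set_def
      proof (rule cINF_lower)
        show "bdd_below ((\<lambda>y. qhdist D x0 y) ` Q)" by (rule bdd_belowI[where m=0]) (auto simp: qhdist_nonneg)
      qed (rule Q(2))
      then have "qhdist_set D x0 Q \<le> real (j0 - 1)" using qle by linarith
      then have "jidx D W x0 Q \<le> j0 - 1" by (rule jidx_le[OF Q(1) _ j2])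
      moreover have "Q \<inter> g ` J \<noteq> {}" using Q x by blast
      then have "jidx D W x0 Q \<ge> j0" using H(9) Q(1) by blast
      ultimately show False using H(5) by linarith
    qed
    show ?thesis
      unfolding curve_length_on_def
    proof (rule SUP_least)
      fix pr assume "pr \<in> {(s, t). s \<in> J \<and> t \<in> J \<and> s \<le> t}"
      then obtain s t where pr: "pr = (s, t)" "s \<in> J" "t \<in> J" "s \<le> t" by auto
      have stI: "s \<in> I" "t \<in> I" using pr H(8) by auto
      have Cle: "ereal (Cst D x0 / sqrt (real j0)) \<le> ereal (C / sqrt (real j0))"
        unfolding C_def using Cst_pos[of D x0] Jr by (simp add: divide_right_mono)
      have R: "curve_length g s' t' \<le> ereal (Cst D x0 / sqrt (real j0))"
        if "t0 \<le> s'" "s' \<le> t'" "s' \<in> J" "t' \<in> I" for s' t'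
        by (rule geo_right[OF D A H(3) intv t0 that(1,2,4) Jr lbJ[OF that(3)]])
      have L: "curve_length g s' t' \<le> ereal (Cst D x0 / sqrt (real j0))"
        if "s' \<in> I" "s' \<le> t'" "t' \<le> t0" "t' \<in> J" for s' t'
        by (rule geo_left[OF D A H(3) intv t0 that(1,2,3) Jr lbJ[OF that(4)]])
      have "curve_length g s t \<le> ereal (C / sqrt (real j0))"
      proof (cases "t0 \<le> s")
        case True then show ?thesis using R[of s t] pr stI Cle by (meson order_trans)
      next
        case False
        show ?thesis
        proof (cases "t \<le> t0")
          case True then show ?thesis using L[of s t] pr stI Cle by (meson order_trans)
        next
          case False2: False
          have "s \<le> t0" "t0 \<le> t" using False False2 by auto
          then have t0J: "t0 \<in> J" using H(6) pr(2,3) unfolding is_interval_1 by blast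
          have "curve_length g s t \<le> curve_length g s t0 + curve_length g t0 t"
            unfolding curve_length_LS by (rule LS_sub) (use False False2 in auto)
          also have "\<dots> \<le> ereal (Cst D x0 / sqrt (real j0)) + ereal (Cst D x0 / sqrt (real j0))"
            using L[of s t0] R[of t0 t] False False2 stI t0J t0 by (intro add_mono) auto
          also have "\<dots> = ereal (C / sqrt (real j0))" unfolding C_def by simp
          finally show ?thesis .
        qed
      qed
      then show "curve_length g (fst pr) (snd pr) \<le> ereal (C / sqrt (real j0))" using pr by simp
    qed
  qed
  have "D \<subseteq> cball x0 (Cst D x0)"
  proof
    fix z assume "z \<in> D"
    then have "cmod (z - x0) \<le> Cst D x0" by (rule bounded_part[OF D A])
    then show "z \<in> cball x0 (Cst D x0)" by (simp add: dist_norm norm_minus_commute)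
  qed
  then have "bounded D" using bounded_cball bounded_subset by blast
  moreover have "\<forall>g a b I j0 J.
            a < b \<and> (I = {a..b} \<or> I = {a..<b}) \<and> qh_geodesic D g I \<and> x0 \<in> g ` I \<and>
            j0 \<ge> 1 \<and> is_interval J \<and> J \<noteq> {} \<and> J \<subseteq> I \<and>
            (\<forall>Q\<in>W. Q \<inter> g ` J \<noteq> {} \<longrightarrow> jidx D W x0 Q \<ge> j0)
            \<longrightarrow> curve_length_on g J \<le> ereal (C / sqrt (real j0))"
  proof (intro allI impI)
    fix g a b I j0 J
    assume "a < b \<and> (I = {a..b} \<or> I = {a..<b}) \<and> qh_geodesic D g I \<and> x0 \<in> g ` I \<and>
            j0 \<ge> 1 \<and> is_interval J \<and> J \<noteq> {} \<and> J \<subseteq> I \<and>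
            (\<forall>Q\<in>W. Q \<inter> g ` J \<noteq> {} \<longrightarrow> jidx D W x0 Q \<ge> j0)"
    then show "curve_length_on g J \<le> ereal (C / sqrt (real j0))"
      by (intro main) (elim conjE; assumption)+
  qed
  ultimately show ?thesis using Cpos by blast
qed

end
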